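(* Let $f\in E^{\nu}_{p,q}$ with $p\ge1$, $q\ge2$, in the corresponding coordinates $x=(\xi,\eta,x_n)$. Then $$\Delta_x f=4(p-3q+3)(x_n^2+|\xi|^2)+4(8\nu-1+q-3p)|\eta|^2.$$
   Context: $f$ is a real homogeneous quartic on $\mathbb{R}^n$ with $|\nabla_x f|^2=16|x|^6$. We say $f\in E^{\nu}_{p,q}$ if there are orthonormal coordinates $x=(\xi,\eta,x_n)$, $\xi\in\mathbb{R}^p$, $\eta\in\mathbb{R}^q$, $p+q=n-1$, in which $f(x)=x_n^4+2(|\xi|^2-3|\eta|^2)x_n^2+8\psi(\xi,\eta)x_n+\theta(\xi,\eta)$ with $\theta$ a homogeneous quartic, $\psi(\xi,\eta)=\xi^\top A_\eta\xi$ where $A_\eta=\sum_{i=1}^q\eta_iA_i$ for symmetric $A_i\in\mathbb{R}^{p\times p}$, and for every $\eta\ne0$ the matrix $A_\eta$ is similar to $|\eta|\,\mathrm{diag}(\mathbf{1}_\nu,-\mathbf{1}_\nu,\mathbf{0}_{p-2\nu})$. *)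

theory Defs
  imports "HOL-Analysis.Analysis"
begin

definition grad_sq :: "('a::euclidean_space \<Rightarrow> real) \<Rightarrow> 'a \<Rightarrow> real" where
  "grad_sq f x = (\<Sum>b\<in>Basis. (deriv (\<lambda>t. f (x + t *\<^sub>R b)) 0)\<^sup>2)"

definition laplacian :: "('a::euclidean_space \<Rightarrow> real) \<Rightarrow> 'a \<Rightarrow> real" where
  "laplacian f x = (\<Sum>b\<in>Basis. deriv (deriv (\<lambda>t. f (x + t *\<^sub>R b))) 0)"

definition hom_quartic :: "('a::euclidean_space \<Rightarrow> real) \<Rightarrow> bool" where
  "hom_quartic \<theta> \<longleftrightarrow> (\<exists>C :: 'a \<Rightarrow> 'a \<Rightarrow> 'a \<Rightarrow> 'a \<Rightarrow> real.
     \<forall>z. \<theta> z = (\<Sum>a\<in>Basis. \<Sum>b\<in>Basis. \<Sum>c\<in>Basis. \<Sum>d\<in>Basis.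
                    C a b c d * (z \<bullet> a) * (z \<bullet> b) * (z \<bullet> c) * (z \<bullet> d)))"

definition similar_matrix :: "real^'n^'n \<Rightarrow> real^'n^'n \<Rightarrow> bool" where
  "similar_matrix A B \<longleftrightarrow> (\<exists>P. invertible P \<and> A = matrix_inv P ** B ** P)"

text \<open>A matrix similar to r * diag(1_nu, -1_nu, 0_(p-2nu)); since the index type is unordered,
  the diagonal is given by a sign pattern s with exactly nu entries 1, nu entries -1, rest 0.\<close>
definition similar_to_signed_diag :: "real^'n^'n \<Rightarrow> real \<Rightarrow> nat \<Rightarrow> bool" where
  "similar_to_signed_diag A r \<nu> \<longleftrightarrow> (\<exists>s :: 'n \<Rightarrow> real.
     (\<forall>i. s i \<in> {-1, 0, 1}) \<and> card {i. s i = 1} = \<nu> \<and> card {i. s i = -1} = \<nu> \<and>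
     similar_matrix A (\<chi> i j. if i = j then r * s i else 0))"

end

theory Submission
  imports Defs
begin


lemma sum_indic: "(\<Sum>i\<in>(UNIV::'n::finite set). if P i then (1::real) else 0) = real (card {i. P i})"
  by (simp add: sum.If_cases)

lemma mm_scaleR_right: "(X::real^'n^'m) ** (c *\<^sub>R Y) = c *\<^sub>R (X ** (Y::real^'k^'n))"
  by (simp add: matrix_matrix_mult_def vec_eq_iff sum_distrib_left algebra_simps)
lemma mm_scaleR_left: "(c *\<^sub>R X::real^'n^'m) ** Y = c *\<^sub>R (X ** (Y::real^'k^'n))"
  by (simp add: matrix_matrix_mult_def vec_eq_iff sum_distrib_left algebra_simps)

lemma sim_facts:
  fixes A :: "real^'n^'n"
  assumes "similar_to_signed_diag A r \<nu>"
  shows "trace A = 0" "A ** A ** A = (r^2) *\<^sub>R A" "trace (A ** A) = r^2 * (2 * real \<nu>)"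
proof -
  obtain s :: "'n \<Rightarrow> real" where s: "\<forall>i. s i \<in> {-1,0,1}" "card {i. s i = 1} = \<nu>" "card {i. s i = -1} = \<nu>"
    and sim: "similar_matrix A (\<chi> i j. if i = j then r * s i else 0)"
    using assms unfolding similar_to_signed_diag_def by blast
  define D :: "real^'n^'n" where "D = (\<chi> i j. if i = j then r * s i else 0)"
  obtain P :: "real^'n^'n" where P: "invertible P" and AP: "A = matrix_inv P ** D ** P"
    using sim unfolding similar_matrix_def D_def by blast
  define Q where "Q = matrix_inv P"
  have PQ: "P ** Q = mat 1" "Q ** P = mat 1"
    using someI_ex[OF P[unfolded invertible_def]] unfolding Q_def matrix_inv_def by auto
  have AQ: "A = Q ** D ** P" using AP Q_def by simp
  have PQ': "X ** P ** Q = X" for X :: "real^'n^'n" by (metis matrix_mul_assoc PQ(1) matrix_mul_rid)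
  have trD: "trace (Q ** M ** P) = trace M" for M :: "real^'n^'n"
  proof -
    have "trace (Q ** M ** P) = trace (P ** (Q ** M))" using trace_mul_sym by metis
    also have "\<dots> = trace M" by (simp add: matrix_mul_assoc PQ)
    finally show ?thesis .
  qed
  have s_split: "s i = (if s i = 1 then 1 else 0) - (if s i = -1 then 1 else 0)" for i
    using s(1) by (cases "s i = 1"; cases "s i = -1") auto
  have s_sq: "s i ^ 2 = (if s i = 1 then 1 else 0) + (if s i = -1 then 1 else 0)" for i
    using s(1)[rule_format, of i] by auto
  have s_cube: "s i ^ 3 = s i" for i
    using s(1)[rule_format, of i] by auto
  have "trace D = r * (\<Sum>i\<in>UNIV. s i)" by (simp add: trace_def D_def sum_distrib_left)
  also have "(\<Sum>i\<in>UNIV. s i) = 0"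
    apply (subst s_split) apply (subst sum_subtractf) by (simp add: sum_indic s(2,3))
  finally show "trace A = 0" using AQ trD by simp
  have DD: "D ** D = (\<chi> i j. if i = j then r^2 * s i ^ 2 else 0)"
    by (simp add: D_def matrix_matrix_mult_def vec_eq_iff if_distrib[of "\<lambda>x. _ * x"] sum.If_cases power2_eq_square cong: if_cong)
  have s01: "s i = 0 \<or> s i * s i = 1" for i using s(1)[rule_format, of i] by auto
  have DDD: "D ** D ** D = r^2 *\<^sub>R D"
    unfolding DD apply (simp add: D_def matrix_matrix_mult_def vec_eq_iff if_distrib[of "\<lambda>x. _ * x"] sum.If_cases power2_eq_square power3_eq_cube cong: if_cong)
    using s01 by blast
  have "A ** A ** A = Q ** (D ** D ** D) ** P"
    unfolding AQ by (simp add: matrix_mul_assoc PQ')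
  also have "\<dots> = r^2 *\<^sub>R (Q ** D ** P)"
    unfolding DDD by (simp add: mm_scaleR_left mm_scaleR_right)
  finally show "A ** A ** A = (r^2) *\<^sub>R A" using AQ by simp
  have "A ** A = Q ** (D ** D) ** P"
    unfolding AQ by (simp add: matrix_mul_assoc PQ')
  then have "trace (A ** A) = trace (D ** D)" using trD by simp
  also have "\<dots> = r^2 * (\<Sum>i\<in>UNIV. s i ^ 2)" by (simp add: DD trace_def sum_distrib_left)
  also have "(\<Sum>i\<in>UNIV. s i ^ 2) = 2 * real \<nu>"
    apply (subst s_sq) apply (subst sum.distrib) by (simp add: sum_indic s(2,3))
  finally show "trace (A ** A) = r^2 * (2 * real \<nu>)" .
qed



lemma poly6_zero:
  fixes c0 c1 c2 c3 c4 c5 c6 :: real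
  assumes "\<And>s. c0 + c1* s + c2* s^2 + c3* s^3 + c4* s^4 + c5* s^5 + c6* s^6 = 0"
  shows "c0 = 0 \<and> c1 = 0 \<and> c2 = 0 \<and> c3 = 0 \<and> c4 = 0 \<and> c5 = 0 \<and> c6 = 0"
proof -
  let ?c = "\<lambda>i. [c0,c1,c2,c3,c4,c5,c6] ! i"
  have "\<forall>x. (\<Sum>i\<le>6. ?c i * x^i) = 0"
    using assms by (simp add: numeral_eq_Suc atMost_Suc add_ac)
  then have "\<forall>i\<le>6. ?c i = 0" using polyfun_eq_0 by blast
  then show ?thesis by (auto dest: spec[of _ 0] spec[of _ 1] spec[of _ 2] spec[of _ 3] spec[of _ 4] spec[of _ 5] spec[of _ 6]
      simp: numeral_eq_Suc)
qed

lemma poly4_zero: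
  fixes c0 c1 c2 c3 c4 :: real
  assumes "\<And>s. c0 + c1* s + c2* s^2 + c3* s^3 + c4* s^4 = 0"
  shows "c0 = 0 \<and> c1 = 0 \<and> c2 = 0 \<and> c3 = 0 \<and> c4 = 0"
  using poly6_zero[of c0 c1 c2 c3 c4 0 0] assms by simp

locale sym4 =
  fixes S :: "'a::real_vector \<Rightarrow> 'a \<Rightarrow> 'a \<Rightarrow> 'a \<Rightarrow> real"
  assumes sw12: "S a b c d = S b a c d" and sw23: "S a b c d = S a c b d"
    and sw34: "S a b c d = S a b d c"
    and add1: "S (a + a') b c d = S a b c d + S a' b c d"
    and scale1: "S (r *\<^sub>R a) b c d = r * S a b c d"
begin

lemma add2: "S a (b + b') c d = S a b c d + S a b' c d"
  by (metis sw12 add1)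
lemma add3: "S a b (c + c') d = S a b c d + S a b c' d"
  by (metis sw12 sw23 add1)
lemma add4: "S a b c (d + d') = S a b c d + S a b c d'"
  by (metis sw12 sw23 sw34 add1)
lemma scale2: "S a (r *\<^sub>R b) c d = r * S a b c d"
  by (metis sw12 scale1)
lemma scale3: "S a b (r *\<^sub>R c) d = r * S a b c d"
  by (metis sw12 sw23 scale1)
lemma scale4: "S a b c (r *\<^sub>R d) = r * S a b c d"
  by (metis sw12 sw23 sw34 scale1)
lemma zero1: "S 0 b c d = 0" using scale1[of 0] by simp
lemma zero2: "S a 0 c d = 0" using scale2[of _ 0] by simp
lemma zero3: "S a b 0 d = 0" using scale3[of _ _ 0] by simp
lemma zero4: "S a b c 0 = 0" using scale4[of _ _ _ 0] by simp
lemma lin1: "linear (\<lambda>a. S a b c d)"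
  by (rule linearI) (simp_all add: add1 scale1)
lemma lin2: "linear (\<lambda>b. S a b c d)"
  by (rule linearI) (simp_all add: add2 scale2)

lemmas mlin = add1 add2 add3 add4 scale1 scale2 scale3 scale4

lemma exp4: "S (z + s *\<^sub>R v) (z + s *\<^sub>R v) (z + s *\<^sub>R v) (z + s *\<^sub>R v)
   = S z z z z + 4* s*S v z z z + 6* s^2*S v v z z + 4* s^3*S v v v z + s^4*S v v v v"
proof -
  have p: "S z v z z = S v z z z" "S z z v z = S v z z z" "S z z z v = S v z z z"
    "S v z v z = S v v z z" "S v z z v = S v v z z" "S z v v z = S v v z z"
    "S z v z v = S v v z z" "S z z v v = S v v z z"
    "S v v z v = S v v v z" "S v z v v = S v v v z" "S z v v v = S v v v z"
    by (metis sw12 sw23 sw34)+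
  show ?thesis by (simp add: mlin p power2_eq_square power3_eq_cube power4_eq_xxxx algebra_simps)
qed

lemma exp3: "S w (z + s *\<^sub>R v) (z + s *\<^sub>R v) (z + s *\<^sub>R v)
   = S w z z z + 3* s*S w v z z + 3* s^2*S w v v z + s^3*S w v v v"
proof -
  have p: "S w z v z = S w v z z" "S w z z v = S w v z z"
    "S w v z v = S w v v z" "S w z v v = S w v v z"
    by (metis sw12 sw23 sw34)+
  show ?thesis by (simp add: mlin p power2_eq_square power3_eq_cube algebra_simps)
qed

lemma exp2: "S (z + s *\<^sub>R v) (z + s *\<^sub>R v) c d
   = S z z c d + 2* s*S v z c d + s^2*S v v c d"
proof -
  have p: "S z v c d = S v z c d" by (metis sw12)
  show ?thesis by (simp add: mlin p power2_eq_square algebra_simps)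
qed

end



definition T4 :: "('a::euclidean_space \<Rightarrow> 'a \<Rightarrow> 'a \<Rightarrow> 'a \<Rightarrow> real) \<Rightarrow> 'a \<Rightarrow> 'a \<Rightarrow> 'a \<Rightarrow> 'a \<Rightarrow> real" where
  "T4 C w1 w2 w3 w4 = (\<Sum>a\<in>Basis. \<Sum>b\<in>Basis. \<Sum>c\<in>Basis. \<Sum>d\<in>Basis.
       C a b c d * (w1 \<bullet> a) * (w2 \<bullet> b) * (w3 \<bullet> c) * (w4 \<bullet> d))"

lemma T4_add:
  "T4 C (a + a') b c d = T4 C a b c d + T4 C a' b c d"
  "T4 C a (b + b') c d = T4 C a b c d + T4 C a b' c d"
  "T4 C a b (c + c') d = T4 C a b c d + T4 C a b c' d"
  "T4 C a b c (d + d') = T4 C a b c d + T4 C a b c d'"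
  by (simp_all add: T4_def inner_add_left algebra_simps sum.distrib)

lemma T4_scale:
  "T4 C (r *\<^sub>R a) b c d = r * T4 C a b c d"
  "T4 C a (r *\<^sub>R b) c d = r * T4 C a b c d"
  "T4 C a b (r *\<^sub>R c) d = r * T4 C a b c d"
  "T4 C a b c (r *\<^sub>R d) = r * T4 C a b c d"
  by (simp_all add: T4_def sum_distrib_left algebra_simps)

definition Sym4 :: "('a::euclidean_space \<Rightarrow> 'a \<Rightarrow> 'a \<Rightarrow> 'a \<Rightarrow> real) \<Rightarrow> 'a \<Rightarrow> 'a \<Rightarrow> 'a \<Rightarrow> 'a \<Rightarrow> real" where
  "Sym4 C a b c d = (T4 C a b c d + T4 C a b d c + T4 C a c b d + T4 C a c d b + T4 C a d b c + T4 C a d c b + T4 C b a c d + T4 C b a d c + T4 C b c a d + T4 C b c d a + T4 C b d a c + T4 C b d c a + T4 C c a b d + T4 C c a d b + T4 C c b a d + T4 C c b d a + T4 C c d a b + T4 C c d b a + T4 C d a b c + T4 C d a c b + T4 C d b a c + T4 C d b c a + T4 C d c a b + T4 C d c b a) / 24"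

lemma sym4_Sym4: "sym4 (Sym4 C)"
  by unfold_locales (simp_all add: Sym4_def T4_add T4_scale field_simps)

lemma Sym4_diag: "Sym4 C z z z z = T4 C z z z z"
  by (simp add: Sym4_def)



lemma lin_expand:
  fixes g :: "real^'n \<Rightarrow> real"
  assumes "linear g"
  shows "(\<Sum>i\<in>UNIV. v$i * g (axis i 1)) = g v"
proof -
  have "g v = g (\<Sum>i\<in>UNIV. v$i *\<^sub>R axis i 1)"
    using basis_expansion[of v] by (simp add: scalar_mult_eq_scaleR)
  also have "\<dots> = (\<Sum>i\<in>UNIV. v$i * g (axis i 1))"
    using assms by (simp add: linear_sum linear_cmul)
  finally show ?thesis by simp
qed

lemma mv_axis_comp: "((N::real^'n^'m) *v axis i 1) $ l = N $ l $ i"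
  by (simp add: matrix_vector_mult_def axis_def if_distrib[of "\<lambda>x. _ * x"] sum.If_cases cong: if_cong)

locale sym3 =
  fixes B :: "real^'n \<Rightarrow> real^'n \<Rightarrow> real^'n \<Rightarrow> real"
  assumes b12: "B u v w = B v u w" and b23: "B u v w = B u w v"
    and badd: "B (u + u') v w = B u v w + B u' v w"
    and bscale: "B (r *\<^sub>R u) v w = r * B u v w"
begin

lemma badd2: "B u (v + v') w = B u v w + B u v' w" by (metis b12 badd)
lemma badd3: "B u v (w + w') = B u v w + B u v w'" by (metis b12 b23 badd)
lemma bscale2: "B u (r *\<^sub>R v) w = r * B u v w" by (metis b12 bscale)
lemma bscale3: "B u v (r *\<^sub>R w) = r * B u v w" by (metis b12 b23 bscale)
lemmas blin = badd badd2 badd3 bscale bscale2 bscale3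
lemma blin1: "linear (\<lambda>u. B u v w)" by (rule linearI) (simp_all add: badd bscale)
lemma blin2: "linear (\<lambda>v. B u v w)" by (rule linearI) (simp_all add: badd2 bscale2)
lemma blin1M: "linear (\<lambda>u. B (M *v u) v w)"
  by (rule linearI) (simp_all add: badd bscale matrix_vector_right_distrib matrix_vector_mult_scaleR)

lemma polarize:
  assumes h: "\<And>\<xi>. B (M *v \<xi>) \<xi> \<xi> = c * B \<xi> \<xi> \<xi>"
  shows "B (M *v u) v w + B (M *v v) u w + B (M *v w) u v = 3 * c * B u v w"
proof -
  have st1: "B (M *v v) u u + 2 * B (M *v u) u v = 3 * c * B u u v" for u v
  proof -
    have p: "B (M *v u) v u = B (M *v u) u v" "B (M *v v) v u = B (M *v v) u v"
      "B u v u = B u u v" "B v u u = B u u v" "B v u v = B u v v" "B v v u = B u v v"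
      by (metis b12 b23)+
    have "\<forall>r. (B (M *v u) u u - c * B u u u) + (B (M *v v) u u + 2 * B (M *v u) u v - 3 * c * B u u v) * r
       + (B (M *v u) v v + 2 * B (M *v v) u v - 3 * c * B u v v) * r^2 + (B (M *v v) v v - c * B v v v) * r^3 + 0 * r^4 = 0"
    proof
      fix r
      have "B (M *v (u + r *\<^sub>R v)) (u + r *\<^sub>R v) (u + r *\<^sub>R v) = c * B (u + r *\<^sub>R v) (u + r *\<^sub>R v) (u + r *\<^sub>R v)"
        by (rule h)
      then show "(B (M *v u) u u - c * B u u u) + (B (M *v v) u u + 2 * B (M *v u) u v - 3 * c * B u u v) * r
       + (B (M *v u) v v + 2 * B (M *v v) u v - 3 * c * B u v v) * r^2 + (B (M *v v) v v - c * B v v v) * r^3 + 0 * r^4 = 0"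
        by (simp add: blin p matrix_vector_right_distrib matrix_vector_mult_scaleR power2_eq_square power3_eq_cube algebra_simps)
    qed
    from poly4_zero[OF this[rule_format]] show ?thesis by simp
  qed
  have "\<forall>r. 0 + (2 * B (M *v v) u w + 2 * B (M *v u) w v + 2 * B (M *v w) u v - 6 * c * B u w v) * r
       + (B (M *v v) w w + 2 * B (M *v w) w v - 3 * c * B w w v) * r^2 + 0 * r^3 + 0 * r^4 = 0"
  proof
    fix r
    have p: "B (M *v v) w u = B (M *v v) u w" "B (M *v u) v w = B (M *v u) w v"
       "B u v w = B u w v" "B w u v = B u w v" "B (M *v w) v u = B (M *v w) u v"
       "B (M *v w) v w = B (M *v w) w v"
      by (metis b12 b23)+
    have "B (M *v v) (u + r *\<^sub>R w) (u + r *\<^sub>R w) + 2 * B (M *v (u + r *\<^sub>R w)) (u + r *\<^sub>R w) v = 3 * c * B (u + r *\<^sub>R w) (u + r *\<^sub>R w) v"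
      by (rule st1)
    then show "0 + (2 * B (M *v v) u w + 2 * B (M *v u) w v + 2 * B (M *v w) u v - 6 * c * B u w v) * r
       + (B (M *v v) w w + 2 * B (M *v w) w v - 3 * c * B w w v) * r^2 + 0 * r^3 + 0 * r^4 = 0"
      using st1[where u=u and v=v] by (simp add: blin p matrix_vector_right_distrib matrix_vector_mult_scaleR power2_eq_square algebra_simps)
  qed
  from poly4_zero[OF this[rule_format]]
  have "B (M *v v) u w + B (M *v u) w v + B (M *v w) u v = 3 * c * B u w v" by simp
  moreover have "B (M *v u) w v = B (M *v u) v w" "B u w v = B u v w" by (metis b23)+
  ultimately show ?thesis by simp
qed

lemma trace_swap:
  "(\<Sum>i\<in>UNIV. B (M *v axis i 1) (N *v axis i 1) x) = (\<Sum>i\<in>UNIV. B ((M ** transpose N) *v axis i 1) (axis i 1) x)"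
proof -
  have "(\<Sum>i\<in>UNIV. B (M *v axis i 1) (N *v axis i 1) x)
      = (\<Sum>i\<in>UNIV. \<Sum>l\<in>UNIV. N$l$i * B (M *v axis i 1) (axis l 1) x)"
    by (rule sum.cong[OF refl], subst lin_expand[OF blin2, symmetric]) (simp add: mv_axis_comp)
  also have "\<dots> = (\<Sum>l\<in>UNIV. \<Sum>i\<in>UNIV. N$l$i * B (M *v axis i 1) (axis l 1) x)"
    by (rule sum.swap)
  also have "\<dots> = (\<Sum>l\<in>UNIV. B (M *v (transpose N *v axis l 1)) (axis l 1) x)"
    by (rule sum.cong[OF refl], subst lin_expand[OF blin1M, symmetric]) (simp add: mv_axis_comp transpose_def)
  also have "\<dots> = (\<Sum>i\<in>UNIV. B ((M ** transpose N) *v axis i 1) (axis i 1) x)"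
    by (simp only: matrix_vector_mul_assoc)
  finally show ?thesis .
qed

lemma harmonic:
  fixes A :: "real^'n^'n"
  assumes At: "transpose A = A" and A3: "A ** A ** A = lam *\<^sub>R A" and lam: "lam \<noteq> 0"
    and I1: "\<And>\<xi>. B (A *v \<xi>) \<xi> \<xi> = 0"
    and I2: "\<And>\<xi>. B ((A ** A) *v \<xi>) \<xi> \<xi> = (2/3) * lam * B \<xi> \<xi> \<xi>"
  shows "(\<Sum>i\<in>UNIV. B (axis i 1) (axis i 1) x) = 0"
proof -
  define P where "P = A ** A"
  define e :: "'n \<Rightarrow> real^'n" where "e i = axis i 1" for i
  define t0 where "t0 y = (\<Sum>i\<in>UNIV. B (e i) (e i) y)" for y
  define t1 where "t1 y = (\<Sum>i\<in>UNIV. B (A *v e i) (e i) y)" for y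
  define t2 where "t2 y = (\<Sum>i\<in>UNIV. B (P *v e i) (e i) y)" for y
  have P1: "B (A *v u) v w + B (A *v v) u w + B (A *v w) u v = 0" for u v w
    using polarize[of A 0] I1 by simp
  have P2: "B (P *v u) v w + B (P *v v) u w + B (P *v w) u v = 2 * lam * B u v w" for u v w
    using polarize[of P "(2/3) * lam", OF I2[folded P_def]] by simp
  have AA: "A *v (A *v y) = P *v y" for y by (simp add: P_def matrix_vector_mul_assoc)
  have AP: "A *v (P *v y) = lam *\<^sub>R (A *v y)" for y
    by (simp add: P_def matrix_vector_mul_assoc matrix_mul_assoc A3 scaleR_matrix_vector_assoc)
  have PA: "P *v (A *v y) = lam *\<^sub>R (A *v y)" for y
    by (simp add: P_def matrix_vector_mul_assoc A3 scaleR_matrix_vector_assoc)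
  have TAA: "(\<Sum>i\<in>UNIV. B (A *v e i) (A *v e i) y) = t2 y" for y
    unfolding t2_def e_def by (subst trace_swap) (simp add: At P_def)
  have TPA: "(\<Sum>i\<in>UNIV. B (P *v e i) (A *v e i) y) = lam * t1 y" for y
    unfolding t1_def e_def by (subst trace_swap) (simp add: At P_def A3 scaleR_matrix_vector_assoc[symmetric] bscale sum_distrib_left)
  have s_i: "2 * t1 y + t0 (A *v y) = 0" for y
  proof -
    have "(\<Sum>i\<in>UNIV. B (A *v e i) (e i) y + B (A *v e i) (e i) y + B (A *v y) (e i) (e i)) = 0"
      by (intro sum.neutral ballI P1)
    moreover have "B (A *v y) (e i) (e i) = B (e i) (e i) (A *v y)" for i by (metis b12 b23)
    ultimately show ?thesis by (simp add: t0_def t1_def sum.distrib sum_distrib_left[symmetric])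
  qed
  have s_ii: "2 * t2 y + t1 (A *v y) = 0" for y
  proof -
    have "(\<Sum>i\<in>UNIV. B (A *v (A *v e i)) (e i) y + B (A *v e i) (A *v e i) y + B (A *v y) (A *v e i) (e i)) = 0"
      by (intro sum.neutral ballI P1)
    moreover have "B (A *v y) (A *v e i) (e i) = B (A *v e i) (e i) (A *v y)" for i by (metis b12 b23)
    ultimately show ?thesis by (simp add: t2_def t1_def sum.distrib AA TAA[unfolded t2_def])
  qed
  have s_iii: "2 * t2 y + t0 (P *v y) = 2 * lam * t0 y" for y
  proof -
    have "(\<Sum>i\<in>UNIV. B (P *v e i) (e i) y + B (P *v e i) (e i) y + B (P *v y) (e i) (e i)) = (\<Sum>i\<in>UNIV. 2 * lam * B (e i) (e i) y)"
      by (intro sum.cong refl P2)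
    moreover have "B (P *v y) (e i) (e i) = B (e i) (e i) (P *v y)" for i by (metis b12 b23)
    ultimately show ?thesis by (simp add: t0_def t2_def sum.distrib sum_distrib_left)
  qed
  have s_iv: "2 * lam * t1 y + t2 (A *v y) = 0" for y
  proof -
    have "(\<Sum>i\<in>UNIV. B (A *v (P *v e i)) (e i) y + B (A *v e i) (P *v e i) y + B (A *v y) (P *v e i) (e i)) = 0"
      by (intro sum.neutral ballI P1)
    moreover have "B (A *v e i) (P *v e i) y = B (P *v e i) (A *v e i) y" for i by (metis b12)
    moreover have "B (A *v y) (P *v e i) (e i) = B (P *v e i) (e i) (A *v y)" for i by (metis b12 b23)
    ultimately show ?thesis by (simp add: t2_def t1_def sum.distrib AP bscale sum_distrib_left[symmetric] TPA[unfolded t1_def])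
  qed
  have s_v: "t2 (P *v y) = 0" for y
  proof -
    have "(\<Sum>i\<in>UNIV. B (P *v (A *v e i)) (A *v e i) y + B (P *v (A *v e i)) (A *v e i) y + B (P *v y) (A *v e i) (A *v e i))
        = (\<Sum>i\<in>UNIV. 2 * lam * B (A *v e i) (A *v e i) y)"
      by (intro sum.cong refl P2)
    moreover have "B (P *v y) (A *v e i) (A *v e i) = B (A *v e i) (A *v e i) (P *v y)" for i by (metis b12 b23)
    ultimately have "(\<Sum>i\<in>UNIV. B (A *v e i) (A *v e i) (P *v y)) = 0"
      by (simp add: sum.distrib PA bscale sum_distrib_left[symmetric])
    then show ?thesis using TAA by simp
  qed
  have "t1 (A *v x) = 0" using s_iv[of "A *v x"] s_v[of x] lam by (simp add: AA)
  then have t2x: "t2 x = 0" using s_ii[of x] by simp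
  have "t0 (P *v x) = 0" using s_i[of "A *v x"] \<open>t1 (A *v x) = 0\<close> by (simp add: AA)
  then have "t0 x = 0" using s_iii[of x] t2x lam by simp
  then show ?thesis by (simp add: t0_def e_def)
qed

end



lemma deriv_poly4:
  fixes g :: "real \<Rightarrow> real"
  assumes g: "\<And>s. g s = c0 + c1* s + c2* s^2 + c3* s^3 + c4* s^4"
  shows "deriv g 0 = c1" "deriv (deriv g) 0 = 2*c2"
proof -
  have ge: "g = (\<lambda>s. c0 + c1* s + c2* s^2 + c3* s^3 + c4* s^4)" using g by auto
  have d1: "(g has_real_derivative (c1 + 2*c2* s + 3*c3* s^2 + 4*c4* s^3)) (at s)" for s
    unfolding ge by (auto intro!: derivative_eq_intros simp: power2_eq_square power3_eq_cube)
  have dg: "deriv g = (\<lambda>s. c1 + 2*c2* s + 3*c3* s^2 + 4*c4* s^3)"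
    using d1 DERIV_imp_deriv by blast
  show "deriv g 0 = c1" using dg by simp
  have "((\<lambda>s. c1 + 2*c2* s + 3*c3* s^2 + 4*c4* s^3) has_real_derivative 2*c2) (at 0)"
    by (auto intro!: derivative_eq_intros)
  then show "deriv (deriv g) 0 = 2*c2" using dg DERIV_imp_deriv by simp
qed

lemma sum_Basis_vec: "(\<Sum>b\<in>(Basis::(real^'n) set). g b) = (\<Sum>i\<in>UNIV. g (axis i 1))"
proof -
  have B: "(Basis::(real^'n) set) = (\<lambda>i. axis i 1) ` UNIV" by (auto simp: Basis_vec_def)
  have "inj (\<lambda>i::'n. axis i (1::real))" by (auto simp: inj_def axis_eq_axis)
  then show ?thesis unfolding B by (simp add: sum.reindex)
qed

lemma sum_Basis_prod_gen:
  fixes f :: "('a::euclidean_space * 'b::euclidean_space) \<Rightarrow> real"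
  shows "sum f Basis = sum (\<lambda>i. f (i, 0)) Basis + sum (\<lambda>i. f (0, i)) Basis"
proof -
  have "inj_on (\<lambda>u. (u::'a, 0::'b)) Basis" "inj_on (\<lambda>u. (0::'a, u::'b)) Basis"
    by (auto intro!: inj_onI Pair_inject)
  thus ?thesis
    unfolding Basis_prod_def
    by (subst sum.union_disjoint) (auto simp: Basis_prod_def sum.reindex)
qed

lemma sum_Basis_Z:
  fixes F :: "((real^'p) \<times> (real^'q)) \<times> real \<Rightarrow> real"
  shows "(\<Sum>b\<in>Basis. F b) = (\<Sum>i\<in>UNIV. F ((axis i 1, 0), 0)) + (\<Sum>j\<in>UNIV. F ((0, axis j 1), 0)) + F ((0,0),1)"
  by (simp add: sum_Basis_prod_gen sum_Basis_vec zero_prod_def)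



lemma inner_sym_mat: "transpose M = M \<Longrightarrow> x \<bullet> ((M::real^'n^'n) *v y) = (M *v x) \<bullet> y"
  by (metis dot_lmul_matrix transpose_matrix_vector)

lemma norm_sq_add: "(norm (x + s *\<^sub>R (e::'a::real_inner)))^2 = (norm x)^2 + 2* s*(x \<bullet> e) + s^2*(e \<bullet> e)"
  by (simp only: power2_norm_eq_inner) (simp add: inner_add_left inner_add_right inner_commute power2_eq_square algebra_simps)

locale L =
  fixes f :: "((real^'p) \<times> (real^'q)) \<times> real \<Rightarrow> real"
    and \<theta> :: "(real^'p) \<times> (real^'q) \<Rightarrow> real"
    and A :: "'q \<Rightarrow> real^'p^'p"
    and \<nu> :: nat
    and C :: "(real^'p) \<times> (real^'q) \<Rightarrow> (real^'p) \<times> (real^'q) \<Rightarrow> (real^'p) \<times> (real^'q) \<Rightarrow> (real^'p) \<times> (real^'q) \<Rightarrow> real"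
  assumes A_sym: "\<And>i. transpose (A i) = A i"
    and A_sim: "\<And>\<eta>. \<eta> \<noteq> 0 \<Longrightarrow>
                   similar_to_signed_diag (\<Sum>i\<in>UNIV. (\<eta> $ i) *\<^sub>R A i) (norm \<eta>) \<nu>"
    and \<theta>_T: "\<And>z. \<theta> z = T4 C z z z z"
    and f_form: "\<And>\<xi> \<eta> t. f ((\<xi>, \<eta>), t) =
                   t ^ 4 + 2 * ((norm \<xi>)\<^sup>2 - 3 * (norm \<eta>)\<^sup>2) * t\<^sup>2
                   + 8 * (\<xi> \<bullet> ((\<Sum>i\<in>UNIV. (\<eta> $ i) *\<^sub>R A i) *v \<xi>)) * t + \<theta> (\<xi>, \<eta>)"
    and eikonal: "\<And>x. grad_sq f x = 16 * (norm x) ^ 6"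
begin

definition Am :: "real^'q \<Rightarrow> real^'p^'p" where "Am \<eta> = (\<Sum>i\<in>UNIV. (\<eta> $ i) *\<^sub>R A i)"
definition S where "S = Sym4 C"

lemma S4: "sym4 S" by (simp add: S_def sym4_Sym4)
lemma thS: "\<theta> z = S z z z z" using \<theta>_T by (simp add: S_def Sym4_diag)

lemma f_eq: "f ((\<xi>, \<eta>), t) = t^4 + 2*((norm \<xi>)^2 - 3*(norm \<eta>)^2)*t^2 + 8*(\<xi> \<bullet> (Am \<eta> *v \<xi>))*t + S (\<xi>,\<eta>) (\<xi>,\<eta>) (\<xi>,\<eta>) (\<xi>,\<eta>)"
  using f_form by (simp add: Am_def thS)

lemma Am_add: "Am (\<eta> + s *\<^sub>R e) = Am \<eta> + s *\<^sub>R Am e"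
  by (simp add: Am_def algebra_simps sum.distrib scaleR_sum_right)
lemma Am_scale: "Am (s *\<^sub>R e) = s *\<^sub>R Am e"
  by (simp add: Am_def algebra_simps scaleR_sum_right)
lemma Am_axis: "Am (axis j 1) = A j"
  by (simp add: Am_def axis_def if_distrib[of "\<lambda>x. x *\<^sub>R _"] cong: if_cong)
lemma Am_zero: "Am 0 = 0" by (simp add: Am_def)
lemma Am_sym: "transpose (Am \<eta>) = Am \<eta>"
proof -
  have a: "A k $ j $ i = A k $ i $ j" for k i j
    using arg_cong[OF A_sym[of k], of "\<lambda>M. M $ i $ j"] by (simp add: transpose_def)
  show ?thesis by (simp add: Am_def transpose_def vec_eq_iff a)
qed

lemma Mfacts:
  "trace (Am \<eta>) = 0" "Am \<eta> ** Am \<eta> ** Am \<eta> = (norm \<eta>)^2 *\<^sub>R Am \<eta>"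
  "trace (Am \<eta> ** Am \<eta>) = (norm \<eta>)^2 * (2 * real \<nu>)"
proof -
  have "(trace (Am \<eta>) = 0 \<and> Am \<eta> ** Am \<eta> ** Am \<eta> = (norm \<eta>)^2 *\<^sub>R Am \<eta>
      \<and> trace (Am \<eta> ** Am \<eta>) = (norm \<eta>)^2 * (2 * real \<nu>))"
  proof (cases "\<eta> = 0")
    case True then show ?thesis by (simp add: Am_zero trace_def)
  next
    case False then show ?thesis using sim_facts[OF A_sim[OF False, folded Am_def]] by simp
  qed
  then show "trace (Am \<eta>) = 0" "Am \<eta> ** Am \<eta> ** Am \<eta> = (norm \<eta>)^2 *\<^sub>R Am \<eta>"
  "trace (Am \<eta> ** Am \<eta>) = (norm \<eta>)^2 * (2 * real \<nu>)" by auto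
qed

lemma dir_p:
  "f ((\<xi> + s *\<^sub>R e, \<eta>), t) =
     (t^4 + 2*((norm \<xi>)^2 - 3*(norm \<eta>)^2)*t^2 + 8*(\<xi> \<bullet> (Am \<eta> *v \<xi>))*t + S (\<xi>,\<eta>) (\<xi>,\<eta>) (\<xi>,\<eta>) (\<xi>,\<eta>))
   + (4*t^2*(\<xi> \<bullet> e) + 8*t*(\<xi> \<bullet> (Am \<eta> *v e) + e \<bullet> (Am \<eta> *v \<xi>)) + 4 * S (e,0) (\<xi>,\<eta>) (\<xi>,\<eta>) (\<xi>,\<eta>)) * s
   + (2*t^2*(e \<bullet> e) + 8*t*(e \<bullet> (Am \<eta> *v e)) + 6 * S (e,0) (e,0) (\<xi>,\<eta>) (\<xi>,\<eta>)) * s^2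
   + (4 * S (e,0) (e,0) (e,0) (\<xi>,\<eta>)) * s^3 + S (e,0) (e,0) (e,0) (e,0) * s^4"
proof -
  have z: "(\<xi> + s *\<^sub>R e, \<eta>) = (\<xi>,\<eta>) + s *\<^sub>R (e,0)" by simp
  show ?thesis
    apply (subst f_eq) unfolding z sym4.exp4[OF S4] norm_sq_add
    by (simp add: matrix_vector_right_distrib matrix_vector_mult_scaleR inner_add_left inner_add_right algebra_simps power2_eq_square)
qed

lemma dir_q:
  "f ((\<xi>, \<eta> + s *\<^sub>R e), t) =
     (t^4 + 2*((norm \<xi>)^2 - 3*(norm \<eta>)^2)*t^2 + 8*(\<xi> \<bullet> (Am \<eta> *v \<xi>))*t + S (\<xi>,\<eta>) (\<xi>,\<eta>) (\<xi>,\<eta>) (\<xi>,\<eta>))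
   + (-12*t^2*(\<eta> \<bullet> e) + 8*t*(\<xi> \<bullet> (Am e *v \<xi>)) + 4 * S (0,e) (\<xi>,\<eta>) (\<xi>,\<eta>) (\<xi>,\<eta>)) * s
   + (-6*t^2*(e \<bullet> e) + 6 * S (0,e) (0,e) (\<xi>,\<eta>) (\<xi>,\<eta>)) * s^2
   + (4 * S (0,e) (0,e) (0,e) (\<xi>,\<eta>)) * s^3 + S (0,e) (0,e) (0,e) (0,e) * s^4"
proof -
  have z: "(\<xi>, \<eta> + s *\<^sub>R e) = (\<xi>,\<eta>) + s *\<^sub>R (0,e)" by simp
  show ?thesis
    apply (subst f_eq) unfolding z sym4.exp4[OF S4] norm_sq_add Am_add
    by (simp add: matrix_vector_mult_add_rdistrib scaleR_matrix_vector_assoc[symmetric] inner_add_left inner_add_right algebra_simps power2_eq_square)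
qed

lemma dir_t:
  "f ((\<xi>, \<eta>), t + s) =
     (t^4 + 2*((norm \<xi>)^2 - 3*(norm \<eta>)^2)*t^2 + 8*(\<xi> \<bullet> (Am \<eta> *v \<xi>))*t + S (\<xi>,\<eta>) (\<xi>,\<eta>) (\<xi>,\<eta>) (\<xi>,\<eta>))
   + (4*t^3 + 4*((norm \<xi>)^2 - 3*(norm \<eta>)^2)*t + 8*(\<xi> \<bullet> (Am \<eta> *v \<xi>))) * s
   + (6*t^2 + 2*((norm \<xi>)^2 - 3*(norm \<eta>)^2)) * s^2 + (4*t) * s^3 + 1 * s^4"
  unfolding f_eq by (simp add: power2_eq_square power3_eq_cube power4_eq_xxxx algebra_simps)

end



lemma sumsq_poly:
  fixes a b c :: "'i \<Rightarrow> real"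
  shows "(\<Sum>i\<in>I. (a i * t^2 + b i * t + c i)^2) = (\<Sum>i\<in>I. (a i)^2) * t^4 + (2*(\<Sum>i\<in>I. a i * b i)) * t^3
     + (\<Sum>i\<in>I. (b i)^2 + 2 * a i * c i) * t^2 + (2*(\<Sum>i\<in>I. b i * c i)) * t + (\<Sum>i\<in>I. (c i)^2)"
proof -
  have "(a i * t^2 + b i * t + c i)^2 = (a i)^2 * t^4 + (2 * (a i * b i)) * t^3 + ((b i)^2 + 2 * a i * c i) * t^2
     + (2 * (b i * c i)) * t + (c i)^2" for i
    by (simp add: power2_eq_square power3_eq_cube power4_eq_xxxx algebra_simps)
  then show ?thesis by (simp add: sum.distrib sum_distrib_right[symmetric] sum_distrib_left[symmetric])
qed

lemma t_extract:
  fixes a b c :: "'i \<Rightarrow> real" and a' b' c' :: "'j \<Rightarrow> real"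
  assumes h: "\<And>t. (\<Sum>i\<in>I. (a i * t^2 + b i * t + c i)^2) + (\<Sum>j\<in>J. (a' j * t^2 + b' j * t + c' j)^2)
     + (kc * t^3 + kb * t + ka)^2 = 16 * (t^2 + R)^3"
  shows "(\<Sum>i\<in>I. (b i)^2 + 2 * a i * c i) + (\<Sum>j\<in>J. (b' j)^2 + 2 * a' j * c' j) + kb^2 = 48 * R^2"
    "2*(\<Sum>i\<in>I. b i * c i) + 2*(\<Sum>j\<in>J. b' j * c' j) + 2 * kb * ka = 0"
    "(\<Sum>i\<in>I. (c i)^2) + (\<Sum>j\<in>J. (c' j)^2) + ka^2 = 16 * R^3"
proof -
  have "((\<Sum>i\<in>I. (c i)^2) + (\<Sum>j\<in>J. (c' j)^2) + ka^2 - 16 * R^3)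
    + (2*(\<Sum>i\<in>I. b i * c i) + 2*(\<Sum>j\<in>J. b' j * c' j) + 2 * kb * ka) * t
    + ((\<Sum>i\<in>I. (b i)^2 + 2 * a i * c i) + (\<Sum>j\<in>J. (b' j)^2 + 2 * a' j * c' j) + kb^2 - 48 * R^2) * t^2
    + (2*(\<Sum>i\<in>I. a i * b i) + 2*(\<Sum>j\<in>J. a' j * b' j) + 2 * kc * ka) * t^3
    + ((\<Sum>i\<in>I. (a i)^2) + (\<Sum>j\<in>J. (a' j)^2) + 2 * kc * kb - 48 * R) * t^4
    + 0 * t^5 + (kc^2 - 16) * t^6 = 0" for t
  proof -
    have "(kc * t^3 + kb * t + ka)^2 - 16 * (t^2 + R)^3 = (ka^2 - 16 * R^3) + (2 * kb * ka) * t + (kb^2 - 48 * R^2) * t^2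
      + (2 * kc * ka) * t^3 + (2 * kc * kb - 48 * R) * t^4 + (kc^2 - 16) * t^6"
      by (simp add: power2_eq_square power3_eq_cube power4_eq_xxxx algebra_simps numeral_eq_Suc)
    with h[of t] show ?thesis unfolding sumsq_poly by (simp add: algebra_simps)
  qed
  from poly6_zero[OF this] show
    "(\<Sum>i\<in>I. (b i)^2 + 2 * a i * c i) + (\<Sum>j\<in>J. (b' j)^2 + 2 * a' j * c' j) + kb^2 = 48 * R^2"
    "2*(\<Sum>i\<in>I. b i * c i) + 2*(\<Sum>j\<in>J. b' j * c' j) + 2 * kb * ka = 0"
    "(\<Sum>i\<in>I. (c i)^2) + (\<Sum>j\<in>J. (c' j)^2) + ka^2 = 16 * R^3" by simp_all
qed

lemma nsq: "(norm (v::real^'n))^2 = (\<Sum>i\<in>UNIV. (v$i)^2)"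
  by (simp only: power2_norm_eq_inner) (simp add: inner_vec_def power2_eq_square)

context L begin

lemma GS: "grad_sq f ((\<xi>,\<eta>),t) =
    (\<Sum>i\<in>UNIV. (4 * (\<xi>$i) * t^2 + 16 * ((Am \<eta> *v \<xi>)$i) * t + 4 * S (axis i 1, 0) (\<xi>,\<eta>) (\<xi>,\<eta>) (\<xi>,\<eta>))^2)
  + (\<Sum>j\<in>UNIV. (-12 * (\<eta>$j) * t^2 + 8 * (\<xi> \<bullet> (A j *v \<xi>)) * t + 4 * S (0, axis j 1) (\<xi>,\<eta>) (\<xi>,\<eta>) (\<xi>,\<eta>))^2)
  + (4 * t^3 + 4*((norm \<xi>)^2 - 3*(norm \<eta>)^2) * t + 8*(\<xi> \<bullet> (Am \<eta> *v \<xi>)))^2"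
proof -
  have eqp: "((\<xi>,\<eta>),t) + s *\<^sub>R ((e,0),0) = ((\<xi> + s *\<^sub>R e, \<eta>), t)" for s e by simp
  have eqq: "((\<xi>,\<eta>),t) + s *\<^sub>R ((0,e),0) = ((\<xi>, \<eta> + s *\<^sub>R e), t)" for s e by simp
  have eqt: "((\<xi>,\<eta>),t) + s *\<^sub>R ((0,0),1) = ((\<xi>, \<eta>), t + s)" for s by simp
  have dp: "deriv (\<lambda>s. f (((\<xi>,\<eta>),t) + s *\<^sub>R ((e,0),0))) 0 =
     4*t^2*(\<xi> \<bullet> e) + 8*t*(\<xi> \<bullet> (Am \<eta> *v e) + e \<bullet> (Am \<eta> *v \<xi>)) + 4 * S (e,0) (\<xi>,\<eta>) (\<xi>,\<eta>) (\<xi>,\<eta>)" for e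
    by (rule deriv_poly4(1)) (subst eqp, rule dir_p)
  have dq: "deriv (\<lambda>s. f (((\<xi>,\<eta>),t) + s *\<^sub>R ((0,e),0))) 0 =
     -12*t^2*(\<eta> \<bullet> e) + 8*t*(\<xi> \<bullet> (Am e *v \<xi>)) + 4 * S (0,e) (\<xi>,\<eta>) (\<xi>,\<eta>) (\<xi>,\<eta>)" for e
    by (rule deriv_poly4(1)) (subst eqq, rule dir_q)
  have dt: "deriv (\<lambda>s. f (((\<xi>,\<eta>),t) + s *\<^sub>R ((0,0),1))) 0 =
     4*t^3 + 4*((norm \<xi>)^2 - 3*(norm \<eta>)^2)*t + 8*(\<xi> \<bullet> (Am \<eta> *v \<xi>))"
    by (rule deriv_poly4(1)) (subst eqt, rule dir_t)
  have sy: "\<xi> \<bullet> (Am \<eta> *v axis i 1) = (Am \<eta> *v \<xi>) $ i" for i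
    using inner_sym_mat[OF Am_sym] by (simp add: inner_axis)
  show ?thesis unfolding grad_sq_def sum_Basis_Z dp dq dt
    by (simp add: inner_axis inner_axis' sy Am_axis algebra_simps)
qed

lemma LAP: "laplacian f ((\<xi>,\<eta>),t) =
    (\<Sum>i\<in>UNIV. 2 * (2*t^2 + 8*t*(axis i 1 \<bullet> (Am \<eta> *v axis i 1)) + 6 * S (axis i 1,0) (axis i 1,0) (\<xi>,\<eta>) (\<xi>,\<eta>)))
  + (\<Sum>j\<in>UNIV. 2 * (-6*t^2 + 6 * S (0,axis j 1) (0,axis j 1) (\<xi>,\<eta>) (\<xi>,\<eta>)))
  + 2 * (6*t^2 + 2*((norm \<xi>)^2 - 3*(norm \<eta>)^2))"
proof -
  have eqp: "((\<xi>,\<eta>),t) + s *\<^sub>R ((e,0),0) = ((\<xi> + s *\<^sub>R e, \<eta>), t)" for s e by simp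
  have eqq: "((\<xi>,\<eta>),t) + s *\<^sub>R ((0,e),0) = ((\<xi>, \<eta> + s *\<^sub>R e), t)" for s e by simp
  have eqt: "((\<xi>,\<eta>),t) + s *\<^sub>R ((0,0),1) = ((\<xi>, \<eta>), t + s)" for s by simp
  have dp: "deriv (deriv (\<lambda>s. f (((\<xi>,\<eta>),t) + s *\<^sub>R ((e,0),0)))) 0 =
     2 * (2*t^2*(e \<bullet> e) + 8*t*(e \<bullet> (Am \<eta> *v e)) + 6 * S (e,0) (e,0) (\<xi>,\<eta>) (\<xi>,\<eta>))" for e
    by (rule deriv_poly4(2)) (subst eqp, rule dir_p)
  have dq: "deriv (deriv (\<lambda>s. f (((\<xi>,\<eta>),t) + s *\<^sub>R ((0,e),0)))) 0 =
     2 * (-6*t^2*(e \<bullet> e) + 6 * S (0,e) (0,e) (\<xi>,\<eta>) (\<xi>,\<eta>))" for e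
    by (rule deriv_poly4(2)) (subst eqq, rule dir_q)
  have dt: "deriv (deriv (\<lambda>s. f (((\<xi>,\<eta>),t) + s *\<^sub>R ((0,0),1)))) 0 =
     2 * (6*t^2 + 2*((norm \<xi>)^2 - 3*(norm \<eta>)^2))"
    by (rule deriv_poly4(2)) (subst eqt, rule dir_t)
  show ?thesis unfolding laplacian_def sum_Basis_Z dp dq dt
    by (simp add: inner_axis)
qed

end



context L begin

definition Psi :: "real^'p \<Rightarrow> real^'q" where "Psi \<xi> = (\<chi> j. \<xi> \<bullet> (A j *v \<xi>))"

lemma linX: "linear (\<lambda>v. S (v, 0) b c d)"
  by (rule linearI) (simp_all add: sym4.add1[OF S4, symmetric] sym4.scale1[OF S4, symmetric])
lemma linY: "linear (\<lambda>v. S (0, v) b c d)"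
  by (rule linearI) (simp_all add: sym4.add1[OF S4, symmetric] sym4.scale1[OF S4, symmetric])

lemma norm6: "(norm (((\<xi>::real^'p),(\<eta>::real^'q)),(t::real)))^6 = (t^2 + ((norm \<xi>)^2 + (norm \<eta>)^2))^3"
proof -
  have "(norm ((\<xi>,\<eta>),t))^2 = t^2 + ((norm \<xi>)^2 + (norm \<eta>)^2)" by (simp add: norm_Pair)
  moreover have "(norm ((\<xi>,\<eta>),t))^6 = ((norm ((\<xi>,\<eta>),t))^2)^3" by (simp add: power_mult[symmetric])
  ultimately show ?thesis by simp
qed

lemma E_all:
  fixes \<xi> :: "real^'p" and \<eta> :: "real^'q"
  defines "z \<equiv> (\<xi>,\<eta>)"
  shows "256 * (norm (Am \<eta> *v \<xi>))^2 + 32 * S (\<xi>,0) z z z + 64 * (norm (Psi \<xi>))^2 - 96 * S (0,\<eta>) z z z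
          + (4*((norm \<xi>)^2 - 3*(norm \<eta>)^2))^2 = 48 * ((norm \<xi>)^2 + (norm \<eta>)^2)^2"
    and "128 * S (Am \<eta> *v \<xi>, 0) z z z + 64 * S (0, Psi \<xi>) z z z
          + 2 * (4*((norm \<xi>)^2 - 3*(norm \<eta>)^2)) * (8*(\<xi> \<bullet> (Am \<eta> *v \<xi>))) = 0"
    and "16 * (\<Sum>i\<in>UNIV. (S (axis i 1, 0) z z z)^2) + 16 * (\<Sum>j\<in>UNIV. (S (0, axis j 1) z z z)^2)
          + (8*(\<xi> \<bullet> (Am \<eta> *v \<xi>)))^2 = 16 * ((norm \<xi>)^2 + (norm \<eta>)^2)^3"
proof -
  note TE = t_extract[where a="\<lambda>i. 4 * (\<xi>$i)" and b="\<lambda>i. 16 * ((Am \<eta> *v \<xi>)$i)"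
     and c="\<lambda>i. 4 * S (axis i 1, 0) z z z" and a'="\<lambda>j. -12 * (\<eta>$j)" and b'="\<lambda>j. 8 * (\<xi> \<bullet> (A j *v \<xi>))"
     and c'="\<lambda>j. 4 * S (0, axis j 1) z z z" and kc=4 and kb="4*((norm \<xi>)^2 - 3*(norm \<eta>)^2)"
     and ka = "8*(\<xi> \<bullet> (Am \<eta> *v \<xi>))" and R="(norm \<xi>)^2 + (norm \<eta>)^2" and I=UNIV and J=UNIV]
  have h: "\<And>t. (\<Sum>i\<in>UNIV. (4 * (\<xi>$i) * t^2 + 16 * ((Am \<eta> *v \<xi>)$i) * t + 4 * S (axis i 1, 0) z z z)^2)
     + (\<Sum>j\<in>UNIV. (-12 * (\<eta>$j) * t^2 + 8 * (\<xi> \<bullet> (A j *v \<xi>)) * t + 4 * S (0, axis j 1) z z z)^2)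
     + (4 * t^3 + 4*((norm \<xi>)^2 - 3*(norm \<eta>)^2) * t + 8*(\<xi> \<bullet> (Am \<eta> *v \<xi>)))^2
     = 16 * (t^2 + ((norm \<xi>)^2 + (norm \<eta>)^2))^3"
    using eikonal GS norm6 unfolding z_def by metis
  have le1: "(\<Sum>i\<in>UNIV. (\<xi>$i) * S (axis i 1, 0) z z z) = S (\<xi>,0) z z z"
    by (rule lin_expand[OF linX])
  have le2: "(\<Sum>i\<in>UNIV. ((Am \<eta> *v \<xi>)$i) * S (axis i 1, 0) z z z) = S (Am \<eta> *v \<xi>,0) z z z"
    by (rule lin_expand[OF linX])
  have le3: "(\<Sum>j\<in>UNIV. (\<eta>$j) * S (0, axis j 1) z z z) = S (0,\<eta>) z z z"
    by (rule lin_expand[OF linY])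
  have le4: "(\<Sum>j\<in>UNIV. (\<xi> \<bullet> (A j *v \<xi>)) * S (0, axis j 1) z z z) = S (0, Psi \<xi>) z z z"
    using lin_expand[OF linY, of "Psi \<xi>"] by (simp add: Psi_def)
  have n1: "(\<Sum>i\<in>UNIV. ((Am \<eta> *v \<xi>)$i)^2) = (norm (Am \<eta> *v \<xi>))^2" by (simp add: nsq)
  have n2: "(\<Sum>j\<in>UNIV. (\<xi> \<bullet> (A j *v \<xi>))^2) = (norm (Psi \<xi>))^2" by (simp add: nsq Psi_def)
  have s1: "(\<Sum>i\<in>UNIV. (16 * ((Am \<eta> *v \<xi>)$i))^2 + 2 * (4 * (\<xi>$i)) * (4 * S (axis i 1, 0) z z z))
      = 256 * (norm (Am \<eta> *v \<xi>))^2 + 32 * S (\<xi>,0) z z z"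
  proof -
    have "(\<Sum>i\<in>UNIV. (16 * ((Am \<eta> *v \<xi>)$i))^2 + 2 * (4 * (\<xi>$i)) * (4 * S (axis i 1, 0) z z z))
       = (\<Sum>i\<in>UNIV. 256 * ((Am \<eta> *v \<xi>)$i)^2 + 32 * ((\<xi>$i) * S (axis i 1, 0) z z z))"
      by (intro sum.cong refl) (simp add: power2_eq_square)
    also have "\<dots> = 256 * (\<Sum>i\<in>UNIV. ((Am \<eta> *v \<xi>)$i)^2) + 32 * (\<Sum>i\<in>UNIV. (\<xi>$i) * S (axis i 1, 0) z z z)"
      by (simp add: sum.distrib sum_distrib_left)
    finally show ?thesis by (simp only: n1 le1)
  qed
  have s2: "(\<Sum>j\<in>UNIV. (8 * (\<xi> \<bullet> (A j *v \<xi>)))^2 + 2 * (-12 * (\<eta>$j)) * (4 * S (0, axis j 1) z z z))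
      = 64 * (norm (Psi \<xi>))^2 - 96 * S (0,\<eta>) z z z"
  proof -
    have "(\<Sum>j\<in>UNIV. (8 * (\<xi> \<bullet> (A j *v \<xi>)))^2 + 2 * (-12 * (\<eta>$j)) * (4 * S (0, axis j 1) z z z))
       = (\<Sum>j\<in>UNIV. 64 * (\<xi> \<bullet> (A j *v \<xi>))^2 - 96 * ((\<eta>$j) * S (0, axis j 1) z z z))"
      by (intro sum.cong refl) (simp add: power2_eq_square)
    also have "\<dots> = 64 * (\<Sum>j\<in>UNIV. (\<xi> \<bullet> (A j *v \<xi>))^2) - 96 * (\<Sum>j\<in>UNIV. (\<eta>$j) * S (0, axis j 1) z z z)"
      by (simp add: sum_subtractf sum_distrib_left)
    finally show ?thesis by (simp only: n2 le3)
  qed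
  have s3: "2 * (\<Sum>i\<in>UNIV. (16 * ((Am \<eta> *v \<xi>)$i)) * (4 * S (axis i 1, 0) z z z)) = 128 * S (Am \<eta> *v \<xi>, 0) z z z"
  proof -
    have "(\<Sum>i\<in>UNIV. (16 * ((Am \<eta> *v \<xi>)$i)) * (4 * S (axis i 1, 0) z z z)) = (\<Sum>i\<in>UNIV. 64 * (((Am \<eta> *v \<xi>)$i) * S (axis i 1, 0) z z z))"
      by (intro sum.cong refl) simp
    also have "\<dots> = 64 * S (Am \<eta> *v \<xi>, 0) z z z" by (simp only: sum_distrib_left[symmetric] le2)
    finally show ?thesis by simp
  qed
  have s4: "2 * (\<Sum>j\<in>UNIV. (8 * (\<xi> \<bullet> (A j *v \<xi>))) * (4 * S (0, axis j 1) z z z)) = 64 * S (0, Psi \<xi>) z z z"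
  proof -
    have "(\<Sum>j\<in>UNIV. (8 * (\<xi> \<bullet> (A j *v \<xi>))) * (4 * S (0, axis j 1) z z z)) = (\<Sum>j\<in>UNIV. 32 * ((\<xi> \<bullet> (A j *v \<xi>)) * S (0, axis j 1) z z z))"
      by (intro sum.cong refl) simp
    also have "\<dots> = 32 * S (0, Psi \<xi>) z z z" by (simp only: sum_distrib_left[symmetric] le4)
    finally show ?thesis by simp
  qed
  have s5: "(\<Sum>i\<in>UNIV. (4 * S (axis i 1, 0) z z z)^2) = 16 * (\<Sum>i\<in>UNIV. (S (axis i 1, 0) z z z)^2)"
    by (simp add: sum_distrib_left power_mult_distrib)
  have s6: "(\<Sum>j\<in>UNIV. (4 * S (0, axis j 1) z z z)^2) = 16 * (\<Sum>j\<in>UNIV. (S (0, axis j 1) z z z)^2)"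
    by (simp add: sum_distrib_left power_mult_distrib)
  show "256 * (norm (Am \<eta> *v \<xi>))^2 + 32 * S (\<xi>,0) z z z + 64 * (norm (Psi \<xi>))^2 - 96 * S (0,\<eta>) z z z
          + (4*((norm \<xi>)^2 - 3*(norm \<eta>)^2))^2 = 48 * ((norm \<xi>)^2 + (norm \<eta>)^2)^2"
    using TE(1)[OF h] s1 s2 by simp
  show "128 * S (Am \<eta> *v \<xi>, 0) z z z + 64 * S (0, Psi \<xi>) z z z
          + 2 * (4*((norm \<xi>)^2 - 3*(norm \<eta>)^2)) * (8*(\<xi> \<bullet> (Am \<eta> *v \<xi>))) = 0"
    using TE(2)[OF h] s3 s4 by simp
  show "16 * (\<Sum>i\<in>UNIV. (S (axis i 1, 0) z z z)^2) + 16 * (\<Sum>j\<in>UNIV. (S (0, axis j 1) z z z)^2)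
          + (8*(\<xi> \<bullet> (Am \<eta> *v \<xi>)))^2 = 16 * ((norm \<xi>)^2 + (norm \<eta>)^2)^3"
    using TE(3)[OF h] s5 s6 by simp
qed

end



context L begin

lemma Psi_scale: "Psi (s *\<^sub>R \<xi>) = s^2 *\<^sub>R Psi \<xi>"
  by (simp add: Psi_def vec_eq_iff matrix_vector_mult_scaleR power2_eq_square)

lemma Sperm:
  "S a b c d = S b a c d" "S a b c d = S a c b d" "S a b c d = S a b d c"
  using sym4.sw12[OF S4] sym4.sw23[OF S4] sym4.sw34[OF S4] by blast+

lemma zsplit: "(s *\<^sub>R \<xi>, \<eta>) = (0,\<eta>) + s *\<^sub>R (\<xi>,0)" by simp

lemma F_all:
  fixes \<xi> :: "real^'p" and \<eta> :: "real^'q"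
  shows "S (\<xi>,0) (\<xi>,0) (\<xi>,0) (\<xi>,0) = (norm \<xi>)^4 - 2 * (norm (Psi \<xi>))^2"
    and "S (\<xi>,0) (\<xi>,0) (0,\<eta>) (0,\<eta>) = 4/3 * (norm (Am \<eta> *v \<xi>))^2 - (norm \<xi>)^2 * (norm \<eta>)^2"
    and "S (\<xi>,0) (0,\<eta>) (0,\<eta>) (0,\<eta>) = 0"
    and "S (0,\<eta>) (0,\<eta>) (0,\<eta>) (0,\<eta>) = (norm \<eta>)^4"
proof -
  define X where "X = ((\<xi>,0) :: (real^'p) \<times> (real^'q))"
  define Y where "Y = ((0,\<eta>) :: (real^'p) \<times> (real^'q))"
  define u where "u = (norm \<xi>)^2"
  define w where "w = (norm \<eta>)^2"
  have p: "S Y X Y Y = S X Y Y Y" "S Y X X Y = S X X Y Y" "S Y X X X = S X X X Y" by (metis Sperm)+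
  have "(-96 * S Y Y Y Y + 96 * w^2) + (-256 * S X Y Y Y) * s
     + (256 * (norm (Am \<eta> *v \<xi>))^2 - 192 * S X X Y Y - 192 * u * w) * s^2 + 0 * s^3
     + (32 * S X X X X + 64 * (norm (Psi \<xi>))^2 - 32 * u^2) * s^4 = 0" for s
  proof -
    note E = E_all(1)[where \<xi>="s *\<^sub>R \<xi>" and \<eta>=\<eta>]
    have e1: "(norm (Am \<eta> *v (s *\<^sub>R \<xi>)))^2 = s^2 * (norm (Am \<eta> *v \<xi>))^2"
      by (simp add: matrix_vector_mult_scaleR power_mult_distrib)
    have e2: "(norm (Psi (s *\<^sub>R \<xi>)))^2 = s^4 * (norm (Psi \<xi>))^2"
      by (simp add: Psi_scale power_mult_distrib power_mult[symmetric])
    have e3: "(norm (s *\<^sub>R \<xi>))^2 = s^2 * u" by (simp add: u_def power_mult_distrib)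
    have e4: "S (s *\<^sub>R \<xi>, 0) (s *\<^sub>R \<xi>, \<eta>) (s *\<^sub>R \<xi>, \<eta>) (s *\<^sub>R \<xi>, \<eta>)
       = s * (S X Y Y Y + 3 * s * S X X Y Y + 3 * s^2 * S X X X Y + s^3 * S X X X X)"
    proof -
      have "(s *\<^sub>R \<xi>, (0::real^'q)) = s *\<^sub>R X" by (simp add: X_def)
      then show ?thesis unfolding zsplit X_def[symmetric] Y_def[symmetric]
        by (simp add: sym4.scale1[OF S4] sym4.exp3[OF S4] algebra_simps)
    qed
    have e5: "S (0, \<eta>) (s *\<^sub>R \<xi>, \<eta>) (s *\<^sub>R \<xi>, \<eta>) (s *\<^sub>R \<xi>, \<eta>)
       = S Y Y Y Y + 3 * s * S X Y Y Y + 3 * s^2 * S X X Y Y + s^3 * S X X X Y"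
      unfolding zsplit X_def[symmetric] Y_def[symmetric] sym4.exp3[OF S4] p ..
    from E show ?thesis unfolding e1 e2 e3 e4 e5 w_def[symmetric]
      by (simp add: power2_eq_square power3_eq_cube power4_eq_xxxx algebra_simps)
  qed
  from poly4_zero[OF this] have c: "-96 * S Y Y Y Y + 96 * w^2 = 0" "-256 * S X Y Y Y = 0"
    "256 * (norm (Am \<eta> *v \<xi>))^2 - 192 * S X X Y Y - 192 * u * w = 0"
    "32 * S X X X X + 64 * (norm (Psi \<xi>))^2 - 32 * u^2 = 0" by auto
  show "S (\<xi>,0) (\<xi>,0) (\<xi>,0) (\<xi>,0) = (norm \<xi>)^4 - 2 * (norm (Psi \<xi>))^2"
    using c(4) unfolding X_def u_def by (simp add: power_mult[symmetric])
  show "S (\<xi>,0) (\<xi>,0) (0,\<eta>) (0,\<eta>) = 4/3 * (norm (Am \<eta> *v \<xi>))^2 - (norm \<xi>)^2 * (norm \<eta>)^2"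
    using c(3) unfolding X_def Y_def u_def w_def by simp
  show "S (\<xi>,0) (0,\<eta>) (0,\<eta>) (0,\<eta>) = 0" using c(2) unfolding X_def Y_def by simp
  show "S (0,\<eta>) (0,\<eta>) (0,\<eta>) (0,\<eta>) = (norm \<eta>)^4"
    using c(1) unfolding Y_def w_def by (simp add: power_mult[symmetric])
qed

end



lemma cubsq_poly:
  fixes a b c d :: "'i \<Rightarrow> real"
  shows "(\<Sum>i\<in>I. (a i + b i * s + c i * s^2 + d i * s^3)^2) =
     (\<Sum>i\<in>I. (a i)^2) + (2 * (\<Sum>i\<in>I. a i * b i)) * s + (\<Sum>i\<in>I. (b i)^2 + 2 * a i * c i) * s^2
     + (2 * (\<Sum>i\<in>I. a i * d i + b i * c i)) * s^3 + (\<Sum>i\<in>I. (c i)^2 + 2 * b i * d i) * s^4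
     + (2 * (\<Sum>i\<in>I. c i * d i)) * s^5 + (\<Sum>i\<in>I. (d i)^2) * s^6"
proof -
  have "(a i + b i * s + c i * s^2 + d i * s^3)^2 = (a i)^2 + (2 * (a i * b i)) * s + ((b i)^2 + 2 * a i * c i) * s^2
     + (2 * (a i * d i + b i * c i)) * s^3 + ((c i)^2 + 2 * b i * d i) * s^4
     + (2 * (c i * d i)) * s^5 + (d i)^2 * s^6" for i
    by (simp add: power2_eq_square power3_eq_cube power4_eq_xxxx algebra_simps numeral_eq_Suc)
  then show ?thesis by (simp add: sum.distrib sum_distrib_right[symmetric] sum_distrib_left[symmetric])
qed

lemma s_extract3:
  fixes a b c d :: "'i \<Rightarrow> real" and a' b' c' d' :: "'j \<Rightarrow> real"
  assumes h: "\<And>s. 16 * (\<Sum>i\<in>I. (a i + b i * s + c i * s^2 + d i * s^3)^2)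
      + 16 * (\<Sum>j\<in>J. (a' j + b' j * s + c' j * s^2 + d' j * s^3)^2) + k * s^4 = 16 * (s^2 * u + w)^3"
  shows "(\<Sum>i\<in>I. a i * d i + b i * c i) + (\<Sum>j\<in>J. a' j * d' j + b' j * c' j) = 0"
proof -
  have "(16 * (\<Sum>i\<in>I. (a i)^2) + 16 * (\<Sum>j\<in>J. (a' j)^2) - 16 * w^3)
    + (32 * (\<Sum>i\<in>I. a i * b i) + 32 * (\<Sum>j\<in>J. a' j * b' j)) * s
    + (16 * (\<Sum>i\<in>I. (b i)^2 + 2 * a i * c i) + 16 * (\<Sum>j\<in>J. (b' j)^2 + 2 * a' j * c' j) - 48 * u * w^2) * s^2
    + (32 * (\<Sum>i\<in>I. a i * d i + b i * c i) + 32 * (\<Sum>j\<in>J. a' j * d' j + b' j * c' j)) * s^3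
    + (16 * (\<Sum>i\<in>I. (c i)^2 + 2 * b i * d i) + 16 * (\<Sum>j\<in>J. (c' j)^2 + 2 * b' j * d' j) + k - 48 * u^2 * w) * s^4
    + (32 * (\<Sum>i\<in>I. c i * d i) + 32 * (\<Sum>j\<in>J. c' j * d' j)) * s^5
    + (16 * (\<Sum>i\<in>I. (d i)^2) + 16 * (\<Sum>j\<in>J. (d' j)^2) - 16 * u^3) * s^6 = 0" for s
  proof -
    have "16 * (s^2 * u + w)^3 = 16 * w^3 + (48 * u * w^2) * s^2 + (48 * u^2 * w) * s^4 + (16 * u^3) * s^6"
      by (simp add: power2_eq_square power3_eq_cube power4_eq_xxxx algebra_simps numeral_eq_Suc)
    with h[of s] show ?thesis unfolding cubsq_poly by (simp add: algebra_simps)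
  qed
  from poly6_zero[OF this] show ?thesis by simp
qed

context L begin

lemma G1:
  fixes \<xi> :: "real^'p" and v \<eta> :: "real^'q"
  shows "S (\<xi>,0) (0,v) (0,\<eta>) (0,\<eta>) = 0" "S (\<xi>,0) (0,v) (0,v) (0,\<eta>) = 0"
proof -
  have "0 + (3 * S (\<xi>,0) (0,v) (0,\<eta>) (0,\<eta>)) * r + (3 * S (\<xi>,0) (0,v) (0,v) (0,\<eta>)) * r^2
      + S (\<xi>,0) (0,v) (0,v) (0,v) * r^3 + 0 * r^4 = 0" for r
  proof -
    have "(0::real^'p, \<eta> + r *\<^sub>R v) = (0,\<eta>) + r *\<^sub>R (0,v)" by simp
    then have "S (\<xi>,0) ((0,\<eta>) + r *\<^sub>R (0,v)) ((0,\<eta>) + r *\<^sub>R (0,v)) ((0,\<eta>) + r *\<^sub>R (0,v)) = 0"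
      using F_all(3)[of \<xi> "\<eta> + r *\<^sub>R v"] by metis
    then show ?thesis unfolding sym4.exp3[OF S4] F_all(3) by (simp add: algebra_simps)
  qed
  from poly4_zero[OF this] show "S (\<xi>,0) (0,v) (0,\<eta>) (0,\<eta>) = 0" "S (\<xi>,0) (0,v) (0,v) (0,\<eta>) = 0" by auto
qed

lemma G2:
  fixes \<xi> e :: "real^'p" and \<eta> :: "real^'q"
  shows "S (e,0) (\<xi>,0) (0,\<eta>) (0,\<eta>) = 4/3 * ((Am \<eta> *v \<xi>) \<bullet> (Am \<eta> *v e)) - (\<xi> \<bullet> e) * (norm \<eta>)^2"
proof -
  have "0 + (2 * S (e,0) (\<xi>,0) (0,\<eta>) (0,\<eta>) - 8/3 * ((Am \<eta> *v \<xi>) \<bullet> (Am \<eta> *v e)) + 2 * (\<xi> \<bullet> e) * (norm \<eta>)^2) * r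
      + (S (e,0) (e,0) (0,\<eta>) (0,\<eta>) - 4/3 * (norm (Am \<eta> *v e))^2 + (e \<bullet> e) * (norm \<eta>)^2) * r^2 + 0 * r^3 + 0 * r^4 = 0" for r
  proof -
    have z: "(\<xi> + r *\<^sub>R e, 0::real^'q) = (\<xi>,0) + r *\<^sub>R (e,0)" by simp
    have "S ((\<xi>,0) + r *\<^sub>R (e,0)) ((\<xi>,0) + r *\<^sub>R (e,0)) (0,\<eta>) (0,\<eta>)
       = 4/3 * (norm (Am \<eta> *v \<xi> + r *\<^sub>R (Am \<eta> *v e)))^2 - (norm (\<xi> + r *\<^sub>R e))^2 * (norm \<eta>)^2"
      using F_all(2)[of "\<xi> + r *\<^sub>R e" \<eta>] unfolding z by (simp add: matrix_vector_right_distrib matrix_vector_mult_scaleR)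
    then show ?thesis unfolding sym4.exp2[OF S4] norm_sq_add F_all(2)
      by (simp add: algebra_simps power2_norm_eq_inner)
  qed
  from poly4_zero[OF this] show ?thesis by simp
qed

lemma G3:
  fixes e \<eta> :: "real^'q"
  shows "S (0,e) (0,\<eta>) (0,\<eta>) (0,\<eta>) = (\<eta> \<bullet> e) * (norm \<eta>)^2"
    "S (0,e) (0,e) (0,\<eta>) (0,\<eta>) = (2 * (norm \<eta>)^2 * (e \<bullet> e) + 4 * (\<eta> \<bullet> e)^2) / 6"
proof -
  have "0 + (4 * S (0,e) (0,\<eta>) (0,\<eta>) (0,\<eta>) - 4 * (\<eta> \<bullet> e) * (norm \<eta>)^2) * r
      + (6 * S (0,e) (0,e) (0,\<eta>) (0,\<eta>) - (2 * (norm \<eta>)^2 * (e \<bullet> e) + 4 * (\<eta> \<bullet> e)^2)) * r^2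
      + (4 * S (0,e) (0,e) (0,e) (0,\<eta>) - 4 * (\<eta> \<bullet> e) * (e \<bullet> e)) * r^3
      + (S (0,e) (0,e) (0,e) (0,e) - (e \<bullet> e)^2) * r^4 = 0" for r
  proof -
    have z: "(0::real^'p, \<eta> + r *\<^sub>R e) = (0,\<eta>) + r *\<^sub>R (0,e)" by simp
    have "S ((0,\<eta>) + r *\<^sub>R (0,e)) ((0,\<eta>) + r *\<^sub>R (0,e)) ((0,\<eta>) + r *\<^sub>R (0,e)) ((0,\<eta>) + r *\<^sub>R (0,e))
       = ((norm (\<eta> + r *\<^sub>R e))^2)^2"
      using F_all(4)[of "\<eta> + r *\<^sub>R e"] unfolding z by (simp add: power_mult[symmetric])
    then show ?thesis unfolding sym4.exp4[OF S4] norm_sq_add F_all(4)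
      by (simp add: power2_eq_square power3_eq_cube power4_eq_xxxx algebra_simps)
  qed
  from poly4_zero[OF this] show "S (0,e) (0,\<eta>) (0,\<eta>) (0,\<eta>) = (\<eta> \<bullet> e) * (norm \<eta>)^2"
    "S (0,e) (0,e) (0,\<eta>) (0,\<eta>) = (2 * (norm \<eta>)^2 * (e \<bullet> e) + 4 * (\<eta> \<bullet> e)^2) / 6" by auto
qed

end



lemma traceI: "(\<Sum>i\<in>UNIV. axis i 1 \<bullet> ((M::real^'n^'n) *v axis i 1)) = trace M"
  by (simp add: trace_def inner_axis' mv_axis_comp)

context L begin

lemma A_trace: "trace (A j) = 0" using Mfacts(1)[of "axis j 1"] by (simp add: Am_axis)

lemma G4:
  fixes \<xi> e :: "real^'p"
  shows "6 * S (e,0) (e,0) (\<xi>,0) (\<xi>,0) = 4 * (\<xi> \<bullet> e)^2 + 2 * (norm \<xi>)^2 * (e \<bullet> e)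
     - 2 * (\<Sum>j\<in>UNIV. (\<xi> \<bullet> (A j *v e) + e \<bullet> (A j *v \<xi>))^2 + 2 * (e \<bullet> (A j *v e)) * (\<xi> \<bullet> (A j *v \<xi>)))"
proof -
  define a where "a j = e \<bullet> (A j *v e)" for j
  define b where "b j = \<xi> \<bullet> (A j *v e) + e \<bullet> (A j *v \<xi>)" for j
  define c where "c j = \<xi> \<bullet> (A j *v \<xi>)" for j
  define u where "u = (norm \<xi>)^2"
  define m where "m = \<xi> \<bullet> e"
  define n where "n = e \<bullet> e"
  have "(S (\<xi>,0) (\<xi>,0) (\<xi>,0) (\<xi>,0) - u^2 + 2 * (\<Sum>j\<in>UNIV. (c j)^2))
     + (4 * S (e,0) (\<xi>,0) (\<xi>,0) (\<xi>,0) - 4 * u * m + 4 * (\<Sum>j\<in>UNIV. b j * c j)) * r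
     + (6 * S (e,0) (e,0) (\<xi>,0) (\<xi>,0) - (4 * m^2 + 2 * u * n) + 2 * (\<Sum>j\<in>UNIV. (b j)^2 + 2 * a j * c j)) * r^2
     + (4 * S (e,0) (e,0) (e,0) (\<xi>,0) - 4 * m * n + 4 * (\<Sum>j\<in>UNIV. a j * b j)) * r^3
     + (S (e,0) (e,0) (e,0) (e,0) - n^2 + 2 * (\<Sum>j\<in>UNIV. (a j)^2)) * r^4 = 0" for r
  proof -
    have z: "(\<xi> + r *\<^sub>R e, 0::real^'q) = (\<xi>,0) + r *\<^sub>R (e,0)" by simp
    have ps: "(norm (Psi (\<xi> + r *\<^sub>R e)))^2 = (\<Sum>j\<in>UNIV. (a j * r^2 + b j * r + c j)^2)"
      unfolding nsq by (intro sum.cong refl)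
        (simp add: Psi_def a_def b_def c_def matrix_vector_right_distrib matrix_vector_mult_scaleR inner_add_left inner_add_right algebra_simps power2_eq_square)
    have "S ((\<xi>,0) + r *\<^sub>R (e,0)) ((\<xi>,0) + r *\<^sub>R (e,0)) ((\<xi>,0) + r *\<^sub>R (e,0)) ((\<xi>,0) + r *\<^sub>R (e,0))
       = ((norm (\<xi> + r *\<^sub>R e))^2)^2 - 2 * (norm (Psi (\<xi> + r *\<^sub>R e)))^2"
      using F_all(1)[of "\<xi> + r *\<^sub>R e"] unfolding z by (simp add: power_mult[symmetric])
    then show ?thesis unfolding sym4.exp4[OF S4] norm_sq_add ps sumsq_poly
      F_all(1) u_def[symmetric] m_def[symmetric] n_def[symmetric]
      by (simp add: power2_eq_square power3_eq_cube power4_eq_xxxx algebra_simps)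
  qed
  from poly4_zero[OF this] show ?thesis by (simp add: a_def b_def c_def u_def m_def n_def)
qed

lemma G4sum:
  fixes \<xi> :: "real^'p"
  shows "(\<Sum>i\<in>UNIV. S (axis i 1,0) (axis i 1,0) (\<xi>,0) (\<xi>,0))
     = ((4 + 2 * real CARD('p)) * (norm \<xi>)^2 - 8 * (\<Sum>j\<in>UNIV. (norm (A j *v \<xi>))^2)) / 6"
proof -
  have sy: "\<xi> \<bullet> (A j *v axis i 1) = (A j *v \<xi>) $ i" for i j
    using inner_sym_mat[OF A_sym[of j]] by (simp add: inner_axis)
  have "6 * (\<Sum>i\<in>UNIV. S (axis i 1,0) (axis i 1,0) (\<xi>,0) (\<xi>,0))
     = (\<Sum>i\<in>UNIV. 4 * (\<xi> $ i)^2 + 2 * (norm \<xi>)^2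
     - 2 * (\<Sum>j\<in>UNIV. 4 * ((A j *v \<xi>) $ i)^2 + 2 * (axis i 1 \<bullet> (A j *v axis i 1)) * (\<xi> \<bullet> (A j *v \<xi>))))"
    unfolding sum_distrib_left G4 by (intro sum.cong refl) (simp add: inner_axis inner_axis' sy power_mult_distrib algebra_simps)
  also have "\<dots> = 4 * (\<Sum>i\<in>UNIV. (\<xi> $ i)^2) + 2 * real CARD('p) * (norm \<xi>)^2
     - 2 * (\<Sum>i\<in>UNIV. \<Sum>j\<in>UNIV. 4 * ((A j *v \<xi>) $ i)^2 + 2 * (axis i 1 \<bullet> (A j *v axis i 1)) * (\<xi> \<bullet> (A j *v \<xi>)))"
    by (simp add: sum.distrib sum_subtractf sum_distrib_left)
  also have "(\<Sum>i\<in>UNIV. \<Sum>j\<in>UNIV. 4 * ((A j *v \<xi>) $ i)^2 + 2 * (axis i 1 \<bullet> (A j *v axis i 1)) * (\<xi> \<bullet> (A j *v \<xi>)))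
     = (\<Sum>j\<in>UNIV. \<Sum>i\<in>UNIV. 4 * ((A j *v \<xi>) $ i)^2 + 2 * (axis i 1 \<bullet> (A j *v axis i 1)) * (\<xi> \<bullet> (A j *v \<xi>)))"
    by (rule sum.swap)
  also have "\<dots> = (\<Sum>j\<in>UNIV. 4 * (norm (A j *v \<xi>))^2)"
  proof (intro sum.cong refl)
    fix j
    have "(\<Sum>i\<in>UNIV. 4 * ((A j *v \<xi>) $ i)^2 + 2 * (axis i 1 \<bullet> (A j *v axis i 1)) * (\<xi> \<bullet> (A j *v \<xi>)))
      = 4 * (\<Sum>i\<in>UNIV. ((A j *v \<xi>) $ i)^2) + 2 * (\<Sum>i\<in>UNIV. axis i 1 \<bullet> (A j *v axis i 1)) * (\<xi> \<bullet> (A j *v \<xi>))"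
      by (simp add: sum.distrib sum_distrib_left sum_distrib_right)
    then show "(\<Sum>i\<in>UNIV. 4 * ((A j *v \<xi>) $ i)^2 + 2 * (axis i 1 \<bullet> (A j *v axis i 1)) * (\<xi> \<bullet> (A j *v \<xi>)))
      = 4 * (norm (A j *v \<xi>))^2" by (simp add: traceI A_trace nsq)
  qed
  also have "4 * (\<Sum>i\<in>UNIV. (\<xi> $ i)^2) = 4 * (norm \<xi>)^2" by (simp add: nsq)
  finally show ?thesis by (simp add: sum_distrib_left[symmetric] algebra_simps)
qed

end



context L begin

lemma I1: "S (Am \<eta> *v \<xi>, 0) (\<xi>,0) (\<xi>,0) (0,\<eta>) = 0"
proof -
  define X where "X = ((\<xi>,0) :: (real^'p) \<times> (real^'q))"
  define Y where "Y = ((0,\<eta>) :: (real^'p) \<times> (real^'q))"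
  define W where "W = ((Am \<eta> *v \<xi>,0) :: (real^'p) \<times> (real^'q))"
  define V where "V = ((0, Psi \<xi>) :: (real^'p) \<times> (real^'q))"
  define u where "u = (norm \<xi>)^2"
  define w where "w = (norm \<eta>)^2"
  define ps where "ps = \<xi> \<bullet> (Am \<eta> *v \<xi>)"
  have "0 + (128 * S W Y Y Y) * s + (384 * S W X Y Y + 64 * S V Y Y Y - 192 * w * ps) * s^2
     + (384 * S W X X Y + 192 * S V X Y Y) * s^3 + (128 * S W X X X + 192 * S V X X Y + 64 * u * ps) * s^4
     + (64 * S V X X X) * s^5 + 0 * s^6 = 0" for s
  proof -
    note E = E_all(2)[where \<xi>="s *\<^sub>R \<xi>" and \<eta>=\<eta>]
    have e1: "(Am \<eta> *v (s *\<^sub>R \<xi>), 0::real^'q) = s *\<^sub>R W" by (simp add: W_def matrix_vector_mult_scaleR)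
    have e2: "(0::real^'p, Psi (s *\<^sub>R \<xi>)) = s^2 *\<^sub>R V" by (simp add: V_def Psi_scale)
    have e3: "(norm (s *\<^sub>R \<xi>))^2 = s^2 * u" by (simp add: u_def power_mult_distrib)
    have e4: "(s *\<^sub>R \<xi>) \<bullet> (Am \<eta> *v (s *\<^sub>R \<xi>)) = s^2 * ps"
      by (simp add: ps_def matrix_vector_mult_scaleR power2_eq_square)
    have zz: "(s *\<^sub>R \<xi>, \<eta>) = Y + s *\<^sub>R X" by (simp add: X_def Y_def)
    from E show ?thesis unfolding e1 e2 e3 e4 zz w_def[symmetric] sym4.scale1[OF S4] sym4.exp3[OF S4]
      by (simp add: power2_eq_square power3_eq_cube power4_eq_xxxx algebra_simps numeral_eq_Suc)
  qed
  from poly6_zero[OF this] have "384 * S W X X Y + 192 * S V X Y Y = 0" by simp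
  moreover have "S V X Y Y = 0" using G1(1)[of \<xi> "Psi \<xi>" \<eta>] Sperm(1)[of V X Y Y]
    unfolding V_def X_def Y_def by simp
  ultimately show ?thesis unfolding W_def X_def Y_def by simp
qed

lemma I2: "S (Am \<eta> *v (Am \<eta> *v \<xi>), 0) (\<xi>,0) (\<xi>,0) (0,\<eta>) = 2/3 * (norm \<eta>)^2 * S (\<xi>,0) (\<xi>,0) (\<xi>,0) (0,\<eta>)"
proof -
  define X where "X = ((\<xi>,0) :: (real^'p) \<times> (real^'q))"
  define Y where "Y = ((0,\<eta>) :: (real^'p) \<times> (real^'q))"
  define u where "u = (norm \<xi>)^2"
  define w where "w = (norm \<eta>)^2"
  define M where "M = Am \<eta>"
  have ex: "S (axis i 1, 0) (s *\<^sub>R \<xi>, \<eta>) (s *\<^sub>R \<xi>, \<eta>) (s *\<^sub>R \<xi>, \<eta>)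
      = S (axis i 1, 0) Y Y Y + (3 * S (axis i 1, 0) X Y Y) * s + (3 * S (axis i 1, 0) X X Y) * s^2 + S (axis i 1, 0) X X X * s^3"
    for i s
  proof -
    have zz: "(s *\<^sub>R \<xi>, \<eta>) = Y + s *\<^sub>R X" by (simp add: X_def Y_def)
    show ?thesis unfolding zz sym4.exp3[OF S4] by (simp add: algebra_simps)
  qed
  have ey: "S (0, axis j 1) (s *\<^sub>R \<xi>, \<eta>) (s *\<^sub>R \<xi>, \<eta>) (s *\<^sub>R \<xi>, \<eta>)
      = S (0, axis j 1) Y Y Y + (3 * S (0, axis j 1) X Y Y) * s + (3 * S (0, axis j 1) X X Y) * s^2 + S (0, axis j 1) X X X * s^3"
    for j s
  proof -
    have zz: "(s *\<^sub>R \<xi>, \<eta>) = Y + s *\<^sub>R X" by (simp add: X_def Y_def)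
    show ?thesis unfolding zz sym4.exp3[OF S4] by (simp add: algebra_simps)
  qed
  have h: "16 * (\<Sum>i\<in>UNIV. (S (axis i 1, 0) Y Y Y + (3 * S (axis i 1, 0) X Y Y) * s + (3 * S (axis i 1, 0) X X Y) * s^2 + S (axis i 1, 0) X X X * s^3)^2)
     + 16 * (\<Sum>j\<in>UNIV. (S (0, axis j 1) Y Y Y + (3 * S (0, axis j 1) X Y Y) * s + (3 * S (0, axis j 1) X X Y) * s^2 + S (0, axis j 1) X X X * s^3)^2)
     + (64 * (\<xi> \<bullet> (Am \<eta> *v \<xi>))^2) * s^4 = 16 * (s^2 * u + w)^3" for s
  proof -
    note E = E_all(3)[where \<xi>="s *\<^sub>R \<xi>" and \<eta>=\<eta>]
    have e3: "(norm (s *\<^sub>R \<xi>))^2 = s^2 * u" by (simp add: u_def power_mult_distrib)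
    have e4: "(8 * ((s *\<^sub>R \<xi>) \<bullet> (Am \<eta> *v (s *\<^sub>R \<xi>))))^2 = (64 * (\<xi> \<bullet> (Am \<eta> *v \<xi>))^2) * s^4"
      by (simp add: matrix_vector_mult_scaleR power2_eq_square power4_eq_xxxx)
    from E show ?thesis unfolding ex ey e3 e4 w_def[symmetric] .
  qed
  note R = s_extract3[OF h]
  have a0: "S (axis i 1, 0) Y Y Y = 0" for i unfolding Y_def by (rule F_all(3))
  have b0: "S (0, axis j 1) X Y Y = 0" for j
    using G1(1)[of \<xi> "axis j 1" \<eta>] Sperm(1)[of "(0, axis j 1)" X Y Y] unfolding X_def Y_def by simp
  have a'e: "S (0, axis j 1) Y Y Y = (\<eta> $ j) * w" for j unfolding Y_def w_def G3(1) by (simp add: inner_axis)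
  have bi: "S (axis i 1, 0) X Y Y = 4/3 * ((M *v (M *v \<xi>)) $ i) - (\<xi> $ i) * w" for i
  proof -
    have "(M *v \<xi>) \<bullet> (M *v axis i 1) = (M *v (M *v \<xi>)) $ i"
      using inner_sym_mat[OF Am_sym[of \<eta>], folded M_def, of "M *v \<xi>" "axis i 1"] by (simp add: inner_axis)
    then show ?thesis unfolding X_def Y_def w_def M_def G2 by (simp add: inner_axis)
  qed
  have le1: "(\<Sum>i\<in>UNIV. ((M *v (M *v \<xi>)) $ i) * S (axis i 1, 0) X X Y) = S (M *v (M *v \<xi>), 0) X X Y"
    by (rule lin_expand[OF linX])
  have le2: "(\<Sum>i\<in>UNIV. (\<xi> $ i) * S (axis i 1, 0) X X Y) = S X X X Y"
    unfolding X_def by (rule lin_expand[OF linX])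
  have le3: "(\<Sum>j\<in>UNIV. (\<eta> $ j) * S (0, axis j 1) X X X) = S X X X Y"
    using lin_expand[OF linY, of \<eta> X X X] Sperm by (metis Y_def)
  have "(\<Sum>i\<in>UNIV. S (axis i 1, 0) Y Y Y * S (axis i 1, 0) X X X + (3 * S (axis i 1, 0) X Y Y) * (3 * S (axis i 1, 0) X X Y))
      = 12 * S (M *v (M *v \<xi>), 0) X X Y - 9 * w * S X X X Y"
  proof -
    have "(\<Sum>i\<in>UNIV. S (axis i 1, 0) Y Y Y * S (axis i 1, 0) X X X + (3 * S (axis i 1, 0) X Y Y) * (3 * S (axis i 1, 0) X X Y))
       = (\<Sum>i\<in>UNIV. 12 * (((M *v (M *v \<xi>)) $ i) * S (axis i 1, 0) X X Y) - 9 * w * ((\<xi> $ i) * S (axis i 1, 0) X X Y))"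
      by (intro sum.cong refl) (simp add: a0 bi algebra_simps)
    also have "\<dots> = 12 * S (M *v (M *v \<xi>), 0) X X Y - 9 * w * S X X X Y"
      by (simp add: sum_subtractf sum_distrib_left[symmetric] le1 le2)
    finally show ?thesis .
  qed
  moreover have "(\<Sum>j\<in>UNIV. S (0, axis j 1) Y Y Y * S (0, axis j 1) X X X + (3 * S (0, axis j 1) X Y Y) * (3 * S (0, axis j 1) X X Y))
      = w * S X X X Y"
  proof -
    have "(\<Sum>j\<in>UNIV. S (0, axis j 1) Y Y Y * S (0, axis j 1) X X X + (3 * S (0, axis j 1) X Y Y) * (3 * S (0, axis j 1) X X Y))
       = (\<Sum>j\<in>UNIV. w * ((\<eta> $ j) * S (0, axis j 1) X X X))"
      by (intro sum.cong refl) (simp add: a'e b0)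
    also have "\<dots> = w * S X X X Y" by (simp add: sum_distrib_left[symmetric] le3)
    finally show ?thesis .
  qed
  ultimately have "12 * S (M *v (M *v \<xi>), 0) X X Y - 9 * w * S X X X Y + w * S X X X Y = 0" using R by simp
  then show ?thesis unfolding X_def Y_def M_def w_def by simp
qed

end



lemma sum_norm_cols: "transpose M = M \<Longrightarrow> (\<Sum>i\<in>UNIV. (norm ((M::real^'n^'n) *v axis i 1))^2) = trace (M ** M)"
proof -
  assume Ms: "transpose M = M"
  have a: "M $ k $ i = M $ i $ k" for k i
    using arg_cong[OF Ms, of "\<lambda>N. N $ i $ k"] by (simp add: transpose_def)
  show ?thesis unfolding nsq trace_def
    by (intro sum.cong refl) (simp add: mv_axis_comp matrix_matrix_mult_def power2_eq_square a)
qed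

context L begin

lemma H0: "(\<Sum>i\<in>UNIV. S (axis i 1,0) (axis i 1,0) (\<xi>,0) (0,\<eta>)) = 0"
proof (cases "\<eta> = 0")
  case True
  then show ?thesis using sym4.zero4[OF S4] by (simp add: zero_prod_def)
next
  case False
  define B where "B = (\<lambda>u v x. S (u,0) (v,0) (x,0) (0::real^'p,\<eta>))"
  have s3: "sym3 B"
  proof
    fix u v w u' :: "real^'p" and r :: real
    show "B u v w = B v u w" unfolding B_def by (rule Sperm(1))
    show "B u v w = B u w v" unfolding B_def by (rule Sperm(2))
    have "(u + u', 0::real^'q) = (u,0) + (u',0)" by simp
    then show "B (u + u') v w = B u v w + B u' v w" unfolding B_def by (simp only: sym4.add1[OF S4])
    have "(r *\<^sub>R u, 0::real^'q) = r *\<^sub>R (u,0)" by simp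
    then show "B (r *\<^sub>R u) v w = r * B u v w" unfolding B_def by (simp only: sym4.scale1[OF S4])
  qed
  have lam: "(norm \<eta>)^2 \<noteq> 0" using False by simp
  have "(\<Sum>i\<in>UNIV. B (axis i 1) (axis i 1) \<xi>) = 0"
  proof (rule sym3.harmonic[OF s3, of "Am \<eta>" "(norm \<eta>)^2"])
    show "transpose (Am \<eta>) = Am \<eta>" by (rule Am_sym)
    show "Am \<eta> ** Am \<eta> ** Am \<eta> = (norm \<eta>)^2 *\<^sub>R Am \<eta>" by (rule Mfacts(2))
    show "(norm \<eta>)^2 \<noteq> 0" by (rule lam)
    show "B (Am \<eta> *v x) x x = 0" for x unfolding B_def by (rule I1)
    show "B ((Am \<eta> ** Am \<eta>) *v x) x x = 2/3 * (norm \<eta>)^2 * B x x x" for x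
      unfolding B_def matrix_vector_mul_assoc[symmetric] by (rule I2)
  qed
  then show ?thesis unfolding B_def .
qed

lemma final: "laplacian f ((\<xi>, \<eta>), t) =
           4 * (real CARD('p) - 3 * real CARD('q) + 3) * (t\<^sup>2 + (norm \<xi>)\<^sup>2)
           + 4 * (8 * real \<nu> - 1 + real CARD('q) - 3 * real CARD('p)) * (norm \<eta>)\<^sup>2"
proof -
  define u where "u = (norm \<xi>)^2"
  define w where "w = (norm \<eta>)^2"
  define M where "M = Am \<eta>"
  have zs: "(\<xi>,\<eta>) = (\<xi>,0) + (0,\<eta>)" by simp
  have bil: "S a a (\<xi>,\<eta>) (\<xi>,\<eta>) = S a a (\<xi>,0) (\<xi>,0) + 2 * S a a (\<xi>,0) (0,\<eta>) + S a a (0,\<eta>) (0,\<eta>)" for a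
  proof -
    have "S a a (0,\<eta>) (\<xi>,0) = S a a (\<xi>,0) (0,\<eta>)" by (rule Sperm(3)[symmetric])
    then show ?thesis by (simp only: zs sym4.add3[OF S4] sym4.add4[OF S4])
  qed
  have tr0: "(\<Sum>i\<in>UNIV. axis i 1 \<bullet> (Am \<eta> *v axis i 1)) = 0" by (simp add: traceI Mfacts(1))
  have sYY: "(\<Sum>i\<in>UNIV. S (axis i 1,0) (axis i 1,0) (0,\<eta>) (0,\<eta>)) = 4/3 * (w * (2 * real \<nu>)) - real CARD('p) * w"
  proof -
    have "(\<Sum>i\<in>UNIV. S (axis i 1,0) (axis i 1,0) (0,\<eta>) (0,\<eta>)) = (\<Sum>i\<in>UNIV. 4/3 * (norm (M *v axis i 1))^2 - w)"
      by (intro sum.cong refl) (simp add: F_all(2) M_def w_def)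
    also have "\<dots> = 4/3 * (\<Sum>i\<in>UNIV. (norm (M *v axis i 1))^2) - real CARD('p) * w"
      by (simp add: sum_subtractf sum_distrib_left)
    also have "\<dots> = 4/3 * trace (M ** M) - real CARD('p) * w"
      by (simp only: sum_norm_cols[OF Am_sym[of \<eta>, folded M_def]])
    finally show ?thesis by (simp add: M_def Mfacts(3) w_def)
  qed
  have sQ: "(\<Sum>j\<in>UNIV. S (0,axis j 1) (0,axis j 1) (\<xi>,\<eta>) (\<xi>,\<eta>))
      = 4/3 * (\<Sum>j\<in>UNIV. (norm (A j *v \<xi>))^2) - real CARD('q) * u + (2 * real CARD('q) * w + 4 * w) / 6"
  proof -
    have p1: "S (0,axis j 1) (0,axis j 1) (\<xi>,0) (\<xi>,0) = S (\<xi>,0) (\<xi>,0) (0,axis j 1) (0,axis j 1)" for j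
      by (metis Sperm)
    have p2: "S (0,axis j 1) (0,axis j 1) (\<xi>,0) (0,\<eta>) = S (\<xi>,0) (0,axis j 1) (0,axis j 1) (0,\<eta>)" for j
      by (metis Sperm)
    have "(\<Sum>j\<in>UNIV. S (0,axis j 1) (0,axis j 1) (\<xi>,\<eta>) (\<xi>,\<eta>))
      = (\<Sum>j\<in>UNIV. (4/3 * (norm (A j *v \<xi>))^2 - u) + (2 * w + 4 * (\<eta> $ j)^2) / 6)"
      by (intro sum.cong refl) (simp add: bil p1 p2 F_all(2) G1(2) G3(2) Am_axis u_def w_def inner_axis inner_axis')
    also have "\<dots> = 4/3 * (\<Sum>j\<in>UNIV. (norm (A j *v \<xi>))^2) - real CARD('q) * u + (2 * real CARD('q) * w + 4 * w) / 6"
      by (simp add: sum.distrib sum_subtractf sum_distrib_left[symmetric] sum_divide_distrib[symmetric] nsq[symmetric] w_def)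
    finally show ?thesis .
  qed
  have sP: "(\<Sum>i\<in>UNIV. S (axis i 1,0) (axis i 1,0) (\<xi>,\<eta>) (\<xi>,\<eta>))
     = ((4 + 2 * real CARD('p)) * u - 8 * (\<Sum>j\<in>UNIV. (norm (A j *v \<xi>))^2)) / 6
       + 4/3 * (w * (2 * real \<nu>)) - real CARD('p) * w"
    unfolding bil by (simp add: sum.distrib sum_distrib_left[symmetric] G4sum H0 sYY u_def)
  have "laplacian f ((\<xi>, \<eta>), t) = 4 * real CARD('p) * t^2 + 16 * t * (\<Sum>i\<in>UNIV. axis i 1 \<bullet> (Am \<eta> *v axis i 1))
      + 12 * (\<Sum>i\<in>UNIV. S (axis i 1,0) (axis i 1,0) (\<xi>,\<eta>) (\<xi>,\<eta>))
      - 12 * real CARD('q) * t^2 + 12 * (\<Sum>j\<in>UNIV. S (0,axis j 1) (0,axis j 1) (\<xi>,\<eta>) (\<xi>,\<eta>))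
      + 2 * (6*t^2 + 2*((norm \<xi>)^2 - 3*(norm \<eta>)^2))"
    unfolding LAP by (simp add: sum.distrib sum_subtractf sum_distrib_left[symmetric] algebra_simps)
  also have "\<dots> = 4 * (real CARD('p) - 3 * real CARD('q) + 3) * (t\<^sup>2 + (norm \<xi>)\<^sup>2)
           + 4 * (8 * real \<nu> - 1 + real CARD('q) - 3 * real CARD('p)) * (norm \<eta>)\<^sup>2"
    unfolding tr0 sP sQ u_def[symmetric] w_def[symmetric] by (simp add: field_simps)
  finally show ?thesis .
qed

end

theorem corollary3p6:
  fixes f :: "((real^'p) \<times> (real^'q)) \<times> real \<Rightarrow> real"
    and \<theta> :: "(real^'p) \<times> (real^'q) \<Rightarrow> real"
    and A :: "'q \<Rightarrow> real^'p^'p"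
    and \<nu> :: nat
  assumes q2: "CARD('q) \<ge> 2"
    and A_sym: "\<And>i. transpose (A i) = A i"
    and A_sim: "\<And>\<eta>. \<eta> \<noteq> 0 \<Longrightarrow>
                   similar_to_signed_diag (\<Sum>i\<in>UNIV. (\<eta> $ i) *\<^sub>R A i) (norm \<eta>) \<nu>"
    and \<theta>_quartic: "hom_quartic \<theta>"
    and f_form: "\<And>\<xi> \<eta> t. f ((\<xi>, \<eta>), t) =
                   t ^ 4 + 2 * ((norm \<xi>)\<^sup>2 - 3 * (norm \<eta>)\<^sup>2) * t\<^sup>2
                   + 8 * (\<xi> \<bullet> ((\<Sum>i\<in>UNIV. (\<eta> $ i) *\<^sub>R A i) *v \<xi>)) * t + \<theta> (\<xi>, \<eta>)"
    and eikonal: "\<And>x. grad_sq f x = 16 * (norm x) ^ 6"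
  shows "\<And>\<xi> \<eta> t. laplacian f ((\<xi>, \<eta>), t) =
           4 * (real CARD('p) - 3 * real CARD('q) + 3) * (t\<^sup>2 + (norm \<xi>)\<^sup>2)
           + 4 * (8 * real \<nu> - 1 + real CARD('q) - 3 * real CARD('p)) * (norm \<eta>)\<^sup>2"
proof -
  fix \<xi> \<eta> t
  obtain C where C: "\<And>z. \<theta> z = T4 C z z z z"
    using \<theta>_quartic unfolding hom_quartic_def T4_def by blast
  interpret L f \<theta> A \<nu> C
    by unfold_locales (use A_sym A_sim C f_form eikonal in auto)
  show "laplacian f ((\<xi>, \<eta>), t) =
           4 * (real CARD('p) - 3 * real CARD('q) + 3) * (t\<^sup>2 + (norm \<xi>)\<^sup>2)
           + 4 * (8 * real \<nu> - 1 + real CARD('q) - 3 * real CARD('p)) * (norm \<eta>)\<^sup>2"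
    by (rule final)
qed


end
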